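(* Purifying extensions are insufficient for the infimum in squashed entanglement: there exist finite-dimensional bipartite densities $\rho^{AB}$ for which the infimum of $I(A:B|C)_{\tilde\rho}$ over only pure extensions (pure states $\tilde\rho^{ABC}$ with $\operatorname{tr}_C\tilde\rho^{ABC}=\rho^{AB}$) is strictly larger than $E_{sq}(A:B)_\rho$. (Equivalently, the same holds for $I_{sq}(\mathcal{A}:\mathcal{B})_\rho$ with $\mathcal{A}=\mathbb{B}(\mathcal{H}_A)\otimes 1$, $\mathcal{B}=1\otimes\mathbb{B}(\mathcal{H}_B)$, which coincides with $E_{sq}(A:B)_\rho$.)
   Context: $I(A:B|C)_\rho = H(AC)_\rho+H(BC)_\rho-H(C)_\rho-H(ABC)_\rho$ with $H(X)_\rho$ the von Neumann entropy of the reduced density on $X$. Squashed entanglement: $E_{sq}(A:B)_\rho=\inf\{ I(A:B|C)_{\tilde\rho} : \tilde\rho^{ABC},\ \tilde\rho^{AB}=\rho^{AB}\}$, the infimum over all finite-dimensional extensions. *)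

theory Defs
  imports "Jordan_Normal_Form.Schur_Decomposition" "HOL-Computational_Algebra.Polynomial"
begin

definition mtrace :: "complex mat \<Rightarrow> complex" where
  "mtrace A = (\<Sum>i<dim_row A. A $$ (i,i))"

definition density :: "nat \<Rightarrow> complex mat \<Rightarrow> bool" where
  "density n \<rho> \<longleftrightarrow> \<rho> \<in> carrier_mat n n \<and> mat_adjoint \<rho> = \<rho> \<and>
     (\<forall>v \<in> carrier_vec n. 0 \<le> Re ((\<rho> *\<^sub>v v) \<bullet>c v)) \<and> mtrace \<rho> = 1"

definition pure_state :: "nat \<Rightarrow> complex mat \<Rightarrow> bool" where
  "pure_state n \<rho> \<longleftrightarrow> density n \<rho> \<and>
     (\<exists>\<psi> \<in> carrier_vec n. \<rho> = mat n n (\<lambda>(i,j). \<psi> $ i * cnj (\<psi> $ j)))"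

text \<open>Von Neumann entropy -tr(rho ln rho) = - sum over eigenvalues (with multiplicity,
  i.e. roots of the characteristic polynomial) of lambda ln lambda, with 0 ln 0 = 0.\<close>
definition entropy :: "complex mat \<Rightarrow> real" where
  "entropy \<rho> = - sum_mset (image_mset
       (\<lambda>x. if Re x = 0 then 0 else Re x * ln (Re x)) (proots (char_poly \<rho>)))"

text \<open>Tripartite system H_A (dim a) (x) H_B (dim b) (x) H_C (dim c);
  basis vector |i>|j>|k> has index (i*b + j)*c + k.\<close>
definition idx3 :: "nat \<Rightarrow> nat \<Rightarrow> nat \<Rightarrow> nat \<Rightarrow> nat \<Rightarrow> nat" where
  "idx3 b c i j k = (i * b + j) * c + k"

definition red_AB :: "nat \<Rightarrow> nat \<Rightarrow> nat \<Rightarrow> complex mat \<Rightarrow> complex mat" where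
  "red_AB a b c \<rho> = mat (a*b) (a*b) (\<lambda>(r,s).
     \<Sum>k<c. \<rho> $$ (idx3 b c (r div b) (r mod b) k, idx3 b c (s div b) (s mod b) k))"

definition red_AC :: "nat \<Rightarrow> nat \<Rightarrow> nat \<Rightarrow> complex mat \<Rightarrow> complex mat" where
  "red_AC a b c \<rho> = mat (a*c) (a*c) (\<lambda>(r,s).
     \<Sum>j<b. \<rho> $$ (idx3 b c (r div c) j (r mod c), idx3 b c (s div c) j (s mod c)))"

definition red_BC :: "nat \<Rightarrow> nat \<Rightarrow> nat \<Rightarrow> complex mat \<Rightarrow> complex mat" where
  "red_BC a b c \<rho> = mat (b*c) (b*c) (\<lambda>(r,s).
     \<Sum>i<a. \<rho> $$ (idx3 b c i (r div c) (r mod c), idx3 b c i (s div c) (s mod c)))"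

definition red_C :: "nat \<Rightarrow> nat \<Rightarrow> nat \<Rightarrow> complex mat \<Rightarrow> complex mat" where
  "red_C a b c \<rho> = mat c c (\<lambda>(r,s).
     \<Sum>i<a. \<Sum>j<b. \<rho> $$ (idx3 b c i j r, idx3 b c i j s))"

definition cmi :: "nat \<Rightarrow> nat \<Rightarrow> nat \<Rightarrow> complex mat \<Rightarrow> real" where
  "cmi a b c \<rho> = entropy (red_AC a b c \<rho>) + entropy (red_BC a b c \<rho>)
                 - entropy (red_C a b c \<rho>) - entropy \<rho>"

definition squashed_ent :: "nat \<Rightarrow> nat \<Rightarrow> complex mat \<Rightarrow> real" where
  "squashed_ent a b \<rho> = Inf {cmi a b c \<sigma> | c \<sigma>. c > 0 \<and> density (a*b*c) \<sigma> \<and> red_AB a b c \<sigma> = \<rho>}"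

definition squashed_ent_pure :: "nat \<Rightarrow> nat \<Rightarrow> complex mat \<Rightarrow> real" where
  "squashed_ent_pure a b \<rho> = Inf {cmi a b c \<sigma> | c \<sigma>. c > 0 \<and> pure_state (a*b*c) \<sigma> \<and> red_AB a b c \<sigma> = \<rho>}"

end

theory Submission
  imports Defs "HOL-Computational_Algebra.Fundamental_Theorem_Algebra"
begin


definition ip :: "nat \<Rightarrow> (nat \<Rightarrow> complex) \<Rightarrow> (nat \<Rightarrow> complex) \<Rightarrow> complex" where
  "ip n x y = (\<Sum>r<n. x r * cnj (y r))"

definition onb :: "nat \<Rightarrow> nat \<Rightarrow> (nat \<Rightarrow> nat \<Rightarrow> complex) \<Rightarrow> bool" where
  "onb n m u \<longleftrightarrow> (\<forall>j<m. \<forall>k<m. ip n (u j) (u k) = (if j = k then 1 else 0))"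

lemma corth_list_exists:
  fixes v :: "complex vec"
  assumes v: "v \<in> carrier_vec n" and v0: "v \<noteq> 0\<^sub>v n"
  shows "\<exists>ws. set ws \<subseteq> carrier_vec n \<and> corthogonal ws \<and> length ws = n \<and> hd ws = v"
proof -
  interpret cof_vec_space n "TYPE(complex)" .
  define b where "b = basis_completion v"
  from basis_completion[OF v v0, folded b_def]
  have span_b: "span (set b) = carrier_vec n" and dist_b: "distinct b" 
    and indep: "\<not> lin_dep (set b)" and b: "set b \<subseteq> carrier_vec n" and hdb: "hd b = v" 
    and len_b: "length b = n" by auto
  have n: "n \<noteq> 0" using v v0 by (auto simp: vec_eq_iff)
  from hdb len_b n obtain vs where bv: "b = v # vs" by (cases b, auto)
  define ws where "ws = gram_schmidt n b"
  from gram_schmidt_result[OF b dist_b indep refl, folded ws_def]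
  have ws: "set ws \<subseteq> carrier_vec n" "corthogonal ws" "length ws = n" 
    by (auto simp: len_b)
  from gram_schmidt_hd[OF v, of vs, folded bv] have hdws: "hd ws = v" unfolding ws_def .
  show ?thesis using ws hdws by blast
qed

lemma ip_self: "ip n x x = of_real (\<Sum>r<n. (cmod (x r))\<^sup>2)"
  unfolding ip_def of_real_sum by (intro sum.cong refl) (metis complex_norm_square of_real_power)

lemma cscalar_ip: "dim_vec a = n \<Longrightarrow> dim_vec b = n \<Longrightarrow> a \<bullet>c b = ip n (\<lambda>r. a $ r) (\<lambda>r. b $ r)"
  unfolding ip_def scalar_prod_def by (simp add: atLeast0LessThan)

lemma unitary_ext:
  assumes n: "n > 0" and v1: "ip n v v = 1"
  shows "\<exists>w. onb n n w \<and> (\<forall>r<n. w 0 r = v r)"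
proof -
  define vv where "vv = vec n v"
  have vv: "vv \<in> carrier_vec n" unfolding vv_def by simp
  have "vv \<noteq> 0\<^sub>v n"
  proof
    assume "vv = 0\<^sub>v n"
    hence "\<forall>r<n. v r = 0" unfolding vv_def by (metis index_vec index_zero_vec(1))
    hence "ip n v v = 0" unfolding ip_def by simp
    thus False using v1 by simp
  qed
  from corth_list_exists[OF vv this] obtain ws where ws: "set ws \<subseteq> carrier_vec n"
    "corthogonal ws" "length ws = n" "hd ws = vv" by blast
  define nr where "nr j = sqrt (\<Sum>r<n. (cmod (ws ! j $ r))\<^sup>2)" for j
  define w where "w j r = ws ! j $ r / of_real (nr j)" for j r
  have dimj: "dim_vec (ws ! j) = n" if "j < n" for j
    using ws(1,3) that nth_mem[of j ws] by (metis carrier_vecD subset_code(1))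
  have ipws: "ip n (\<lambda>r. ws ! j $ r) (\<lambda>r. ws ! k $ r) = (if j = k then of_real ((nr j)\<^sup>2) else 0)"
    if "j < n" "k < n" for j k
  proof -
    have c: "ws ! j \<bullet>c ws ! k = 0 \<longleftrightarrow> j \<noteq> k" using corthogonalD[OF ws(2)] that ws(3) by auto
    have "ws ! j \<bullet>c ws ! k = ip n (\<lambda>r. ws ! j $ r) (\<lambda>r. ws ! k $ r)"
      using cscalar_ip dimj that by auto
    moreover have "ip n (\<lambda>r. ws ! j $ r) (\<lambda>r. ws ! j $ r) = of_real ((nr j)\<^sup>2)"
      unfolding ip_self nr_def by (simp add: sum_nonneg)
    ultimately show ?thesis using c by auto
  qed
  have nr0: "nr j \<noteq> 0" if "j < n" for j
  proof
    assume "nr j = 0"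
    hence "ws ! j \<bullet>c ws ! j = 0" using ipws[OF that that] cscalar_ip dimj that by auto
    thus False using corthogonalD[OF ws(2)] that ws(3) by auto
  qed
  have "onb n n w" unfolding onb_def
  proof (intro allI impI)
    fix j k assume j: "j < n" and k: "k < n"
    have "ip n (w j) (w k) = ip n (\<lambda>r. ws ! j $ r) (\<lambda>r. ws ! k $ r) / (of_real (nr j) * of_real (nr k))"
      unfolding ip_def w_def sum_divide_distrib by (intro sum.cong refl) simp
    also have "\<dots> = (if j = k then 1 else 0)" using ipws[OF j k] nr0[OF j] nr0[OF k]
      by (simp add: power2_eq_square)
    finally show "ip n (w j) (w k) = (if j = k then 1 else 0)" .
  qed
  moreover have "w 0 r = v r" if "r < n" for r
  proof -
    have ws0: "ws ! 0 = vv" using ws n by (metis hd_conv_nth list.size(3) not_less0 less_nat_zero_code)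
    have "nr 0 = 1"
    proof -
      have "of_real ((nr 0)\<^sup>2) = (1::complex)" using ipws[OF n n] v1 ws0 unfolding vv_def
        by (auto simp: ip_def)
      hence "(nr 0)\<^sup>2 = 1" by (metis of_real_eq_1_iff)
      moreover have "nr 0 \<ge> 0" unfolding nr_def by (simp add: sum_nonneg)
      ultimately show ?thesis by (simp add: power2_eq_1_iff)
    qed
    thus ?thesis unfolding w_def ws0 vv_def using that by simp
  qed
  ultimately show ?thesis by blast
qed

lemma onb_complete:
  assumes o: "onb n n u" and r: "r < n" and s: "s < n"
  shows "(\<Sum>j<n. u j r * cnj (u j s)) = (if r = s then 1 else 0)"
proof -
  define U where "U = mat n n (\<lambda>(r,j). u j r)"
  define V where "V = mat n n (\<lambda>(j,s). cnj (u j s))"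
  have U: "U \<in> carrier_mat n n" and V: "V \<in> carrier_mat n n" unfolding U_def V_def by auto
  have "V * U = 1\<^sub>m n"
  proof (rule eq_matI)
    fix j k assume j: "j < dim_row (1\<^sub>m n)" and k: "k < dim_col (1\<^sub>m n)"
    have "(V * U) $$ (j,k) = (\<Sum>r<n. cnj (u j r) * u k r)"
      using j k unfolding U_def V_def by (simp add: scalar_prod_def atLeast0LessThan)
    also have "\<dots> = ip n (u k) (u j)" unfolding ip_def by (simp add: mult.commute)
    also have "\<dots> = 1\<^sub>m n $$ (j,k)" using o j k unfolding onb_def by auto
    finally show "(V * U) $$ (j,k) = 1\<^sub>m n $$ (j,k)" .
  qed (auto simp: U_def V_def)
  hence UV: "U * V = 1\<^sub>m n" using mat_mult_left_right_inverse[OF V U] by simp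
  have "(U * V) $$ (r,s) = (\<Sum>j<n. u j r * cnj (u j s))"
    using r s unfolding U_def V_def by (simp add: scalar_prod_def atLeast0LessThan)
  thus ?thesis using UV r s by simp
qed

lemma ip_lin:
  assumes o: "onb n N w"
  shows "ip n (\<lambda>r. \<Sum>i<N. a i * w i r) (\<lambda>r. \<Sum>k<N. b k * w k r) = (\<Sum>i<N. a i * cnj (b i))"
proof -
  have "ip n (\<lambda>r. \<Sum>i<N. a i * w i r) (\<lambda>r. \<Sum>k<N. b k * w k r)
      = (\<Sum>r<n. \<Sum>i<N. \<Sum>k<N. a i * cnj (b k) * (w i r * cnj (w k r)))"
    unfolding ip_def cnj_sum sum_product
    by (intro sum.cong refl) (simp add: mult_ac)
  also have "\<dots> = (\<Sum>i<N. \<Sum>r<n. \<Sum>k<N. a i * cnj (b k) * (w i r * cnj (w k r)))"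
    by (rule sum.swap)
  also have "\<dots> = (\<Sum>i<N. \<Sum>k<N. \<Sum>r<n. a i * cnj (b k) * (w i r * cnj (w k r)))"
    by (rule sum.cong[OF refl], rule sum.swap)
  also have "\<dots> = (\<Sum>i<N. \<Sum>k<N. a i * cnj (b k) * ip n (w i) (w k))"
    unfolding ip_def sum_distrib_left by simp
  also have "\<dots> = (\<Sum>i<N. \<Sum>k<N. if i = k then a i * cnj (b k) else 0)"
    using o unfolding onb_def by (intro sum.cong refl) auto
  also have "\<dots> = (\<Sum>i<N. a i * cnj (b i))"
    by (simp add: sum.delta)
  finally show ?thesis .
qed

definition herm :: "nat \<Rightarrow> complex mat \<Rightarrow> bool" where
  "herm n A \<longleftrightarrow> (\<forall>i<n. \<forall>j<n. A $$ (i,j) = cnj (A $$ (j,i)))"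

lemma eigen_exists:
  assumes A: "A \<in> carrier_mat n n" and n: "n > 0" and H: "herm n A"
  shows "\<exists>v (e::real). ip n v v = 1 \<and> (\<forall>r<n. (\<Sum>s<n. A $$ (r,s) * v s) = of_real e * v r)"
proof -
  have "degree (char_poly A) = n" using degree_monic_char_poly[OF A] by simp
  hence "\<not> constant (poly (char_poly A))" using n constant_degree[of "char_poly A"] by simp
  then obtain z where "poly (char_poly A) z = 0" using fundamental_theorem_of_algebra by blast
  hence "eigenvalue A z" using eigenvalue_root_char_poly[OF A] by simp
  from find_eigenvector[OF A this] obtain x where "eigenvector A x z" by blast
  hence x: "x \<in> carrier_vec n" and x0: "x \<noteq> 0\<^sub>v n" and Ax: "A *\<^sub>v x = z \<cdot>\<^sub>v x"
    unfolding eigenvector_def using A by auto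
  define nx where "nx = sqrt (\<Sum>r<n. (cmod (x $ r))\<^sup>2)"
  have nx0: "nx \<noteq> 0"
  proof
    assume "nx = 0"
    hence "(\<Sum>r<n. (cmod (x $ r))\<^sup>2) = 0" unfolding nx_def by simp
    hence "\<forall>r<n. (cmod (x $ r))\<^sup>2 = 0" by (subst (asm) sum_nonneg_eq_0_iff) auto
    hence "x = 0\<^sub>v n" using x by (intro eq_vecI) auto
    thus False using x0 by simp
  qed
  define v where "v r = x $ r / of_real nx" for r
  have "ip n v v = ip n (\<lambda>r. x $ r) (\<lambda>r. x $ r) / (of_real nx * of_real nx)"
    unfolding ip_def v_def sum_divide_distrib by (intro sum.cong refl) simp
  also have "\<dots> = 1"
  proof -
    define S where "S = (\<Sum>r<n. (cmod (x $ r))\<^sup>2)"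
    have S0: "S \<ge> 0" unfolding S_def by (simp add: sum_nonneg)
    have e1: "of_real nx * of_real nx = (of_real S :: complex)"
      unfolding nx_def S_def[symmetric] of_real_mult[symmetric] using S0 by simp
    have e2: "S \<noteq> 0" using nx0 unfolding nx_def S_def by simp
    show ?thesis unfolding ip_self S_def[symmetric] by (simp only: e1) (simp add: e2)
  qed
  finally have v1: "ip n v v = 1" .
  have Av: "(\<Sum>s<n. A $$ (r,s) * v s) = z * v r" if r: "r < n" for r
  proof -
    have "(A *\<^sub>v x) $ r = (\<Sum>s<n. A $$ (r,s) * x $ s)"
      using A x r by (simp add: scalar_prod_def atLeast0LessThan)
    hence "(\<Sum>s<n. A $$ (r,s) * x $ s) = z * x $ r" using Ax x r by simp
    thus ?thesis unfolding v_def
      by (simp add: sum_divide_distrib[symmetric] times_divide_eq_right)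
  qed
  have zreal: "cnj z = z"
  proof -
    have z: "z = (\<Sum>r<n. \<Sum>s<n. A $$ (r,s) * v s * cnj (v r))"
    proof -
      have "z = z * ip n v v" using v1 by simp
      also have "\<dots> = (\<Sum>r<n. (\<Sum>s<n. A $$ (r,s) * v s) * cnj (v r))"
        unfolding ip_def sum_distrib_left using Av by (intro sum.cong refl) (simp add: mult.assoc)
      finally show ?thesis by (simp add: sum_distrib_right)
    qed
    have "cnj z = (\<Sum>r<n. \<Sum>s<n. cnj (A $$ (r,s)) * cnj (v s) * v r)"
      by (subst z) (simp add: cnj_sum)
    also have "\<dots> = (\<Sum>r<n. \<Sum>s<n. A $$ (s,r) * cnj (v s) * v r)"
      using H unfolding herm_def by (intro sum.cong refl) (metis complex_cnj_cnj lessThan_iff)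
    also have "\<dots> = (\<Sum>s<n. \<Sum>r<n. A $$ (s,r) * cnj (v s) * v r)" by (rule sum.swap)
    also have "\<dots> = z" by (subst z) (intro sum.cong refl, simp add: mult_ac)
    finally show ?thesis .
  qed
  hence "z = of_real (Re z)" by (metis Reals_cnj_iff complex_is_Real_iff of_real_Re)
  thus ?thesis using v1 Av by (intro exI[of _ v] exI[of _ "Re z"]) auto
qed

lemma sum4_swap:
  "(\<Sum>i\<in>I. \<Sum>j\<in>J. \<Sum>a\<in>K. \<Sum>b\<in>L. F i j a b) = (\<Sum>a\<in>K. \<Sum>b\<in>L. \<Sum>i\<in>I. \<Sum>j\<in>J. F i j a b)"
proof -
  have "(\<Sum>i\<in>I. \<Sum>j\<in>J. \<Sum>a\<in>K. \<Sum>b\<in>L. F i j a b) = (\<Sum>i\<in>I. \<Sum>a\<in>K. \<Sum>j\<in>J. \<Sum>b\<in>L. F i j a b)"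
    by (rule sum.cong[OF refl], rule sum.swap)
  also have "\<dots> = (\<Sum>i\<in>I. \<Sum>a\<in>K. \<Sum>b\<in>L. \<Sum>j\<in>J. F i j a b)"
    by (rule sum.cong[OF refl], rule sum.cong[OF refl], rule sum.swap)
  also have "\<dots> = (\<Sum>a\<in>K. \<Sum>i\<in>I. \<Sum>b\<in>L. \<Sum>j\<in>J. F i j a b)"
    by (rule sum.swap)
  also have "\<dots> = (\<Sum>a\<in>K. \<Sum>b\<in>L. \<Sum>i\<in>I. \<Sum>j\<in>J. F i j a b)"
    by (rule sum.cong[OF refl], rule sum.swap)
  finally show ?thesis .
qed

lemma sum3_swap:
  "(\<Sum>i\<in>I. \<Sum>j\<in>J. \<Sum>a\<in>K. F i j a) = (\<Sum>a\<in>K. \<Sum>i\<in>I. \<Sum>j\<in>J. F i j a)"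
proof -
  have "(\<Sum>i\<in>I. \<Sum>j\<in>J. \<Sum>a\<in>K. F i j a) = (\<Sum>i\<in>I. \<Sum>a\<in>K. \<Sum>j\<in>J. F i j a)"
    by (rule sum.cong[OF refl], rule sum.swap)
  also have "\<dots> = (\<Sum>a\<in>K. \<Sum>i\<in>I. \<Sum>j\<in>J. F i j a)"
    by (rule sum.swap)
  finally show ?thesis .
qed

lemma prod2_sum: "c * (\<Sum>i\<in>I. f i) * (\<Sum>j\<in>J. g j) = (\<Sum>i\<in>I. \<Sum>j\<in>J. c * f i * g j)"
  for c :: "'a::comm_ring_1"
proof -
  have "c * (\<Sum>i\<in>I. f i) * (\<Sum>j\<in>J. g j) = c * ((\<Sum>i\<in>I. f i) * (\<Sum>j\<in>J. g j))" by (simp add: mult.assoc)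
  also have "\<dots> = c * (\<Sum>i\<in>I. \<Sum>j\<in>J. f i * g j)" by (simp only: sum_product)
  also have "\<dots> = (\<Sum>i\<in>I. \<Sum>j\<in>J. c * (f i * g j))" by (simp only: sum_distrib_left)
  finally show ?thesis by (simp add: mult.assoc)
qed

lemma unitary_conj_back:
  assumes o: "onb n n w" and r: "r < n" and s: "s < n"
  shows "(\<Sum>i<n. \<Sum>j<n. w i r * cnj (w j s) * (\<Sum>a<n. \<Sum>b<n. cnj (w i a) * M a b * w j b)) = M r s"
proof -
  have "(\<Sum>i<n. \<Sum>j<n. w i r * cnj (w j s) * (\<Sum>a<n. \<Sum>b<n. cnj (w i a) * M a b * w j b))
     = (\<Sum>i<n. \<Sum>j<n. \<Sum>a<n. \<Sum>b<n. M a b * (w i r * cnj (w i a)) * (w j b * cnj (w j s)))"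
    unfolding sum_distrib_left by (intro sum.cong refl) (simp add: mult_ac)
  also have "\<dots> = (\<Sum>a<n. \<Sum>b<n. \<Sum>i<n. \<Sum>j<n. M a b * (w i r * cnj (w i a)) * (w j b * cnj (w j s)))"
    by (rule sum4_swap)
  also have "\<dots> = (\<Sum>a<n. \<Sum>b<n. M a b * (\<Sum>i<n. w i r * cnj (w i a)) * (\<Sum>j<n. w j b * cnj (w j s)))"
    unfolding prod2_sum by (rule refl)
  also have "\<dots> = (\<Sum>a<n. \<Sum>b<n. M a b * (if r = a then 1 else 0) * (if b = s then 1 else 0))"
    using onb_complete[OF o] r s by (intro sum.cong refl) simp
  also have "\<dots> = (\<Sum>a<n. \<Sum>b<n. if a = r then (if b = s then M a b else 0) else 0)"
    by (intro sum.cong refl) auto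
  also have "\<dots> = (\<Sum>a<n. if a = r then M a s else 0)"
    using s by (intro sum.cong refl) (auto simp: sum.delta)
  also have "\<dots> = M r s" using r by (simp add: sum.delta)
  finally show ?thesis .
qed

lemma spectral:
  assumes "A \<in> carrier_mat n n" "herm n A"
  shows "\<exists>u (lam::nat\<Rightarrow>real). onb n n u \<and>
    (\<forall>r<n. \<forall>s<n. A $$ (r,s) = (\<Sum>k<n. of_real (lam k) * u k r * cnj (u k s)))"
  using assms
proof (induction n arbitrary: A)
  case 0
  then show ?case unfolding onb_def by auto
next
  case (Suc m)
  define n where "n = Suc m"
  have A: "A \<in> carrier_mat n n" and H: "herm n A" using Suc.prems n_def by auto
  obtain v e where v1: "ip n v v = 1" and Av: "\<And>r. r < n \<Longrightarrow> (\<Sum>s<n. A $$ (r,s) * v s) = of_real e * v r"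
    using eigen_exists[OF A _ H] n_def by auto
  obtain w where o: "onb n n w" and w0: "\<And>r. r < n \<Longrightarrow> w 0 r = v r"
    using unitary_ext[OF _ v1] n_def by auto
  have Hc: "\<And>a b. a < n \<Longrightarrow> b < n \<Longrightarrow> cnj (A $$ (a,b)) = A $$ (b,a)"
    using H unfolding herm_def by metis
  define A' where "A' i j = (\<Sum>a<n. \<Sum>b<n. cnj (w i a) * A $$ (a,b) * w j b)" for i j
  have A'h: "A' i j = cnj (A' j i)" if "i < n" "j < n" for i j
  proof -
    have "cnj (A' j i) = (\<Sum>a<n. \<Sum>b<n. w j a * A $$ (b,a) * cnj (w i b))"
      unfolding A'_def cnj_sum using Hc by (intro sum.cong refl) simp
    also have "\<dots> = (\<Sum>b<n. \<Sum>a<n. w j a * A $$ (b,a) * cnj (w i b))" by (rule sum.swap)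
    also have "\<dots> = A' i j" unfolding A'_def by (intro sum.cong refl) (simp add: mult_ac)
    finally show ?thesis by simp
  qed
  have A'0: "A' i 0 = (if i = 0 then of_real e else 0)" if "i < n" for i
  proof -
    have "A' i 0 = (\<Sum>a<n. cnj (w i a) * (\<Sum>b<n. A $$ (a,b) * v b))"
      unfolding A'_def sum_distrib_left using w0 by (intro sum.cong refl) (simp add: mult.assoc)
    also have "\<dots> = (\<Sum>a<n. of_real e * (w 0 a * cnj (w i a)))"
      by (intro sum.cong refl) (simp add: Av w0)
    also have "\<dots> = of_real e * ip n (w 0) (w i)"
      unfolding ip_def sum_distrib_left by simp
    also have "\<dots> = (if i = 0 then of_real e else 0)" using o that n_def unfolding onb_def by auto
    finally show ?thesis .
  qed
  have A'0': "A' 0 j = (if j = 0 then of_real e else 0)" if "j < n" for j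
    using A'h[OF _ that] A'0[OF that] n_def by auto
  define A3 where "A3 = mat m m (\<lambda>(i,j). A' (Suc i) (Suc j))"
  have A3: "A3 \<in> carrier_mat m m" unfolding A3_def by simp
  have H3: "herm m A3" unfolding herm_def
  proof (intro allI impI)
    fix i j assume "i < m" "j < m"
    thus "A3 $$ (i,j) = cnj (A3 $$ (j,i))" unfolding A3_def using A'h[of "Suc i" "Suc j"] n_def by simp
  qed
  obtain u3 lam3 where o3: "onb m m u3" and
    d3: "\<And>r s. r < m \<Longrightarrow> s < m \<Longrightarrow> A3 $$ (r,s) = (\<Sum>k<m. of_real (lam3 k) * u3 k r * cnj (u3 k s))"
    using Suc.IH[OF A3 H3] by blast
  define coef where "coef k i = (if k = 0 then (if i = 0 then 1 else 0) else if i = 0 then 0 else u3 (k-1) (i-1))"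
    for k i
  define u where "u k r = (\<Sum>i<n. coef k i * w i r)" for k r
  define lam where "lam k = (if k = 0 then e else lam3 (k-1))" for k
  have ou: "onb n n u" unfolding onb_def
  proof (intro allI impI)
    fix j k assume j: "j < n" and k: "k < n"
    have "ip n (u j) (u k) = (\<Sum>i<n. coef j i * cnj (coef k i))"
      unfolding u_def by (rule ip_lin[OF o])
    also have "\<dots> = coef j 0 * cnj (coef k 0) + (\<Sum>i<m. coef j (Suc i) * cnj (coef k (Suc i)))"
      unfolding n_def by (rule sum.lessThan_Suc_shift)
    also have "\<dots> = (if j = k then 1 else 0)"
    proof (cases "j = 0")
      case True thus ?thesis by (simp add: coef_def)
    next
      case False
      show ?thesis
      proof (cases "k = 0")
        case True thus ?thesis using False by (simp add: coef_def)
      next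
        case False2: False
        have "(\<Sum>i<m. coef j (Suc i) * cnj (coef k (Suc i))) = ip m (u3 (j-1)) (u3 (k-1))"
          unfolding ip_def coef_def using False False2 by simp
        also have "\<dots> = (if j = k then 1 else 0)" using o3 False False2 j k n_def unfolding onb_def
          by auto
        finally show ?thesis using False by (simp add: coef_def)
      qed
    qed
    finally show "ip n (u j) (u k) = (if j = k then 1 else 0)" .
  qed
  have dA': "A' i j = (\<Sum>k<n. of_real (lam k) * coef k i * cnj (coef k j))" if i: "i < n" and j: "j < n" for i j
  proof -
    have "(\<Sum>k<n. of_real (lam k) * coef k i * cnj (coef k j)) =
       of_real (lam 0) * coef 0 i * cnj (coef 0 j) + (\<Sum>k<m. of_real (lam (Suc k)) * coef (Suc k) i * cnj (coef (Suc k) j))"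
      unfolding n_def by (rule sum.lessThan_Suc_shift)
    also have "\<dots> = A' i j"
    proof (cases "i = 0 \<or> j = 0")
      case True thus ?thesis using A'0 A'0' i j by (auto simp: coef_def lam_def)
    next
      case False
      then obtain i' j' where ii: "i = Suc i'" and jj: "j = Suc j'" by (metis not0_implies_Suc)
      have "A' i j = A3 $$ (i', j')" unfolding A3_def ii jj using i j ii jj n_def by simp
      also have "\<dots> = (\<Sum>k<m. of_real (lam3 k) * u3 k i' * cnj (u3 k j'))" using d3 i j ii jj n_def by simp
      finally show ?thesis unfolding ii jj by (simp add: coef_def lam_def)
    qed
    finally show ?thesis by simp
  qed
  have "A $$ (r,s) = (\<Sum>k<n. of_real (lam k) * u k r * cnj (u k s))" if r: "r < n" and s: "s < n" for r s
  proof -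
    have "A $$ (r,s) = (\<Sum>i<n. \<Sum>j<n. w i r * cnj (w j s) * A' i j)"
      using unitary_conj_back[OF o r s, of "\<lambda>a b. A $$ (a,b)"] unfolding A'_def by simp
    also have "\<dots> = (\<Sum>i<n. \<Sum>j<n. \<Sum>k<n. of_real (lam k) * (coef k i * w i r) * cnj (coef k j * w j s))"
      using dA' by (intro sum.cong refl) (simp add: sum_distrib_left mult_ac)
    also have "\<dots> = (\<Sum>k<n. \<Sum>i<n. \<Sum>j<n. of_real (lam k) * (coef k i * w i r) * cnj (coef k j * w j s))"
      by (rule sum3_swap)
    also have "\<dots> = (\<Sum>k<n. of_real (lam k) * u k r * cnj (u k s))"
      unfolding u_def cnj_sum by (intro sum.cong refl) (simp only: prod2_sum)
    finally show ?thesis .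
  qed
  thus ?case using ou n_def by blast
qed

definition eta :: "real \<Rightarrow> real" where
  "eta x = (if x = 0 then 0 else - (x * ln x))"

lemma proots_lin_prod:
  "proots (\<Prod>a\<leftarrow>xs. [:- a, 1:]) = mset (xs :: complex list)"
proof (induction xs)
  case Nil then show ?case by simp
next
  case (Cons x xs)
  have "proots (\<Prod>a\<leftarrow>x # xs. [:- a, 1:]) = proots ([:- x, 1:] * (\<Prod>a\<leftarrow>xs. [:- a, 1:]))" by simp
  also have "\<dots> = proots [:- x, 1:] + proots (\<Prod>a\<leftarrow>xs. [:- a, 1:])"
    by (rule proots_mult) (auto simp: prod_list_zero_iff)
  also have "\<dots> = {#x#} + mset xs" using Cons proots_linear_factor[of "-x"] by simp
  finally show ?case by simp
qed

lemma entropy_spec: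
  assumes A: "A \<in> carrier_mat n n" and o: "onb n n u"
    and d: "\<forall>r<n. \<forall>s<n. A $$ (r,s) = (\<Sum>k<n. of_real (lam k) * u k r * cnj (u k s))"
  shows "entropy A = (\<Sum>k<n. eta (lam k))"
proof -
  define U where "U = mat n n (\<lambda>(r,k). u k r)"
  define V where "V = mat n n (\<lambda>(k,s). cnj (u k s))"
  define D where "D = mat n n (\<lambda>(j,k). if j = k then complex_of_real (lam k) else 0)"
  have U: "U \<in> carrier_mat n n" and V: "V \<in> carrier_mat n n" and D: "D \<in> carrier_mat n n"
    unfolding U_def V_def D_def by auto
  have UV: "U * V = 1\<^sub>m n"
  proof (rule eq_matI)
    fix r s assume r: "r < dim_row (1\<^sub>m n)" and s: "s < dim_col (1\<^sub>m n)"
    have "(U * V) $$ (r,s) = (\<Sum>j<n. u j r * cnj (u j s))"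
      using r s unfolding U_def V_def by (simp add: scalar_prod_def atLeast0LessThan)
    thus "(U * V) $$ (r,s) = 1\<^sub>m n $$ (r,s)" using onb_complete[OF o] r s by simp
  qed (auto simp: U_def V_def)
  hence VU: "V * U = 1\<^sub>m n" using mat_mult_left_right_inverse[OF U V] by simp
  have UD: "(U * D) $$ (r,k) = u k r * of_real (lam k)" if "r < n" "k < n" for r k
  proof -
    have "(U * D) $$ (r,k) = (\<Sum>j<n. u j r * (if j = k then complex_of_real (lam k) else 0))"
      using that unfolding U_def D_def by (simp add: scalar_prod_def atLeast0LessThan)
    also have "\<dots> = (\<Sum>j<n. if j = k then u k r * complex_of_real (lam k) else 0)"
      by (intro sum.cong refl) auto
    finally show ?thesis using that by simp
  qed
  have "A = U * D * V"
  proof (rule eq_matI)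
    fix r s assume r: "r < dim_row (U * D * V)" and s: "s < dim_col (U * D * V)"
    hence r: "r < n" and s: "s < n" using U V by auto
    have "(U * D * V) $$ (r,s) = (\<Sum>k<n. (U * D) $$ (r,k) * cnj (u k s))"
      using r s U D unfolding V_def by (simp add: scalar_prod_def atLeast0LessThan)
    also have "\<dots> = A $$ (r,s)" using UD r d s by (simp add: mult_ac)
    finally show "A $$ (r,s) = (U * D * V) $$ (r,s)" by simp
  qed (use A U V in auto)
  hence "similar_mat A D" unfolding similar_mat_def similar_mat_wit_def
    using A U V D UV VU by (intro exI[of _ U] exI[of _ V]) auto
  hence "char_poly A = char_poly D" by (rule char_poly_similar)
  also have "\<dots> = (\<Prod>a\<leftarrow>diag_mat D. [:- a, 1:])"
    by (rule char_poly_upper_triangular[OF D]) (auto simp: upper_triangular_def D_def)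
  finally have "proots (char_poly A) = mset (diag_mat D)" using proots_lin_prod by simp
  also have "diag_mat D = map (\<lambda>k. complex_of_real (lam k)) [0..<n]"
    unfolding diag_mat_def D_def by auto
  finally have pr: "proots (char_poly A) = mset (map (\<lambda>k. complex_of_real (lam k)) [0..<n])" .
  have "entropy A = - (\<Sum>k\<in>{0..<n}. (\<lambda>x. if Re x = 0 then 0 else Re x * ln (Re x)) (complex_of_real (lam k)))"
    unfolding entropy_def pr sum_unfold_sum_mset by (simp add: image_mset.compositionality o_def)
  also have "\<dots> = (\<Sum>k<n. eta (lam k))"
    unfolding eta_def sum_negf[symmetric] atLeast0LessThan by (intro sum.cong refl) (simp only: Re_complex_of_real, simp)
  finally show ?thesis .
qed


lemma eta_0[simp]: "eta 0 = 0" unfolding eta_def by simp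

lemma eta_tangent:
  assumes x: "x \<ge> 0" and m: "m > 0"
  shows "eta x \<le> - x * ln m + m - x"
proof (cases "x = 0")
  case True thus ?thesis using m by simp
next
  case False
  hence x0: "x > 0" using x by simp
  have "ln (m / x) \<le> m / x - 1" using m x0 by (intro ln_le_minus_one) simp
  hence "ln m - ln x \<le> m / x - 1" using m x0 by (simp add: ln_div)
  hence "x * (ln m - ln x) \<le> x * (m / x - 1)" using x0 by (intro mult_left_mono) auto
  hence "x * ln m - x * ln x \<le> m - x" using x0 by (simp add: algebra_simps)
  thus ?thesis using False unfolding eta_def by simp
qed

lemma jensen_eta:
  assumes fin: "finite K" and w: "\<And>k. k \<in> K \<Longrightarrow> w k \<ge> 0" and x: "\<And>k. k \<in> K \<Longrightarrow> x k \<ge> 0"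
    and ws: "(\<Sum>k\<in>K. w k) \<le> 1"
  shows "(\<Sum>k\<in>K. w k * eta (x k)) \<le> eta (\<Sum>k\<in>K. w k * x k)"
proof -
  define m where "m = (\<Sum>k\<in>K. w k * x k)"
  have m0: "m \<ge> 0" unfolding m_def using w x by (intro sum_nonneg) simp
  show ?thesis
  proof (cases "m = 0")
    case True
    hence "\<forall>k\<in>K. w k * x k = 0" using fin w x unfolding m_def
      by (subst (asm) sum_nonneg_eq_0_iff) auto
    hence "\<forall>k\<in>K. w k * eta (x k) = 0" by (metis eta_0 mult_eq_0_iff)
    thus ?thesis using True unfolding m_def by simp
  next
    case False
    hence mp: "m > 0" using m0 by simp
    have "(\<Sum>k\<in>K. w k * eta (x k)) \<le> (\<Sum>k\<in>K. w k * (- x k * ln m + m - x k))"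
      using eta_tangent[OF x mp] w by (intro sum_mono mult_left_mono) auto
    also have "\<dots> = (\<Sum>k\<in>K. (w k * x k) * (- ln m) + m * w k - w k * x k)"
      by (intro sum.cong refl) (simp add: algebra_simps)
    also have "\<dots> = (\<Sum>k\<in>K. w k * x k) * (- ln m) + m * (\<Sum>k\<in>K. w k) - (\<Sum>k\<in>K. w k * x k)"
      by (simp add: sum.distrib sum_subtractf sum_distrib_left sum_distrib_right)
    also have "\<dots> = - m * ln m + m * (\<Sum>k\<in>K. w k) - m" unfolding m_def[symmetric] by simp
    also have "\<dots> \<le> - m * ln m" using ws m0 by (simp add: mult_left_le)
    also have "\<dots> = eta m" unfolding eta_def using False by simp
    finally show ?thesis unfolding m_def .
  qed
qed

lemma eta_scale:
  assumes c: "c > 0" and y: "y \<ge> 0"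
  shows "eta (c * y) = c * eta y - c * y * ln c"
proof (cases "y = 0")
  case True thus ?thesis by simp
next
  case False
  hence "y > 0" using y by simp
  thus ?thesis using c unfolding eta_def by (simp add: ln_mult algebra_simps)
qed

lemma gen_jensen:
  assumes finJ: "finite J" and finK: "finite K"
    and S: "\<And>k j. k \<in> K \<Longrightarrow> j \<in> J \<Longrightarrow> S k j \<ge> 0"
    and mu: "\<And>k. k \<in> K \<Longrightarrow> mu k \<ge> 0"
    and col: "\<And>j. j \<in> J \<Longrightarrow> (\<Sum>k\<in>K. S k j) \<le> c"
    and row: "\<And>k. k \<in> K \<Longrightarrow> (\<Sum>j\<in>J. S k j) = 1"
    and c: "c > 0"
    and nu: "\<And>j. j \<in> J \<Longrightarrow> nu j = (\<Sum>k\<in>K. S k j * mu k)"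
  shows "(\<Sum>k\<in>K. eta (mu k)) - ln c * (\<Sum>j\<in>J. nu j) \<le> (\<Sum>j\<in>J. eta (nu j))"
proof -
  have step: "(\<Sum>k\<in>K. S k j * eta (mu k)) - nu j * ln c \<le> eta (nu j)" if j: "j \<in> J" for j
  proof -
    define y where "y = (\<Sum>k\<in>K. (S k j / c) * mu k)"
    have y0: "y \<ge> 0" unfolding y_def using S[OF _ j] mu c by (intro sum_nonneg) simp
    have nuy: "nu j = c * y" unfolding y_def nu[OF j] sum_distrib_left using c by (intro sum.cong refl) simp
    have "(\<Sum>k\<in>K. (S k j / c) * eta (mu k)) \<le> eta y"
      unfolding y_def using S[OF _ j] mu c col[OF j]
      by (intro jensen_eta finK) (auto simp: sum_divide_distrib[symmetric])
    hence "c * (\<Sum>k\<in>K. (S k j / c) * eta (mu k)) \<le> c * eta y" using c by simp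
    moreover have "c * (\<Sum>k\<in>K. (S k j / c) * eta (mu k)) = (\<Sum>k\<in>K. S k j * eta (mu k))"
      unfolding sum_distrib_left using c by (intro sum.cong refl) simp
    ultimately show ?thesis unfolding nuy eta_scale[OF c y0] by simp
  qed
  have "(\<Sum>k\<in>K. eta (mu k)) = (\<Sum>k\<in>K. (\<Sum>j\<in>J. S k j) * eta (mu k))" using row by simp
  also have "\<dots> = (\<Sum>j\<in>J. \<Sum>k\<in>K. S k j * eta (mu k))"
    unfolding sum_distrib_right by (rule sum.swap)
  finally have e: "(\<Sum>k\<in>K. eta (mu k)) = (\<Sum>j\<in>J. \<Sum>k\<in>K. S k j * eta (mu k))" .
  have "(\<Sum>j\<in>J. (\<Sum>k\<in>K. S k j * eta (mu k)) - nu j * ln c) \<le> (\<Sum>j\<in>J. eta (nu j))"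
    using step by (rule sum_mono)
  thus ?thesis unfolding e sum_subtractf sum_distrib_right[symmetric] by (simp add: mult.commute)
qed


definition nrm2 :: "nat \<Rightarrow> (nat \<Rightarrow> complex) \<Rightarrow> real" where
  "nrm2 N x = (\<Sum>r<N. (cmod (x r))\<^sup>2)"

definition orthset :: "nat \<Rightarrow> 'i set \<Rightarrow> ('i \<Rightarrow> nat \<Rightarrow> complex) \<Rightarrow> bool" where
  "orthset N I u \<longleftrightarrow> (\<forall>j\<in>I. \<forall>k\<in>I. ip N (u j) (u k) = (if j = k then 1 else 0))"

lemma cmod_sq_c: "complex_of_real ((cmod z)\<^sup>2) = z * cnj z"
  by (metis complex_norm_square)

lemma sum_cmod_sq_c: "complex_of_real (\<Sum>k\<in>A. (cmod (f k))\<^sup>2) = (\<Sum>k\<in>A. f k * cnj (f k))"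
  unfolding of_real_sum by (intro sum.cong refl) (rule cmod_sq_c)

lemma nrm2_c: "complex_of_real (nrm2 N x) = ip N x x"
  unfolding nrm2_def ip_def by (rule sum_cmod_sq_c)

lemma nrm2_nonneg: "nrm2 N x \<ge> 0" unfolding nrm2_def by (simp add: sum_nonneg)

lemma ip_cnj: "cnj (ip N x y) = ip N y x"
  unfolding ip_def cnj_sum by (simp add: mult.commute)

lemma ip_lin_set:
  assumes o: "orthset n I w" and fin: "finite I"
  shows "ip n (\<lambda>r. \<Sum>i\<in>I. a i * w i r) (\<lambda>r. \<Sum>k\<in>I. b k * w k r) = (\<Sum>i\<in>I. a i * cnj (b i))"
proof -
  have "ip n (\<lambda>r. \<Sum>i\<in>I. a i * w i r) (\<lambda>r. \<Sum>k\<in>I. b k * w k r)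
      = (\<Sum>r<n. \<Sum>i\<in>I. \<Sum>k\<in>I. a i * cnj (b k) * (w i r * cnj (w k r)))"
    unfolding ip_def cnj_sum sum_product
    by (intro sum.cong refl) (simp add: mult_ac)
  also have "\<dots> = (\<Sum>i\<in>I. \<Sum>r<n. \<Sum>k\<in>I. a i * cnj (b k) * (w i r * cnj (w k r)))"
    by (rule sum.swap)
  also have "\<dots> = (\<Sum>i\<in>I. \<Sum>k\<in>I. \<Sum>r<n. a i * cnj (b k) * (w i r * cnj (w k r)))"
    by (rule sum.cong[OF refl], rule sum.swap)
  also have "\<dots> = (\<Sum>i\<in>I. \<Sum>k\<in>I. a i * cnj (b k) * ip n (w i) (w k))"
    unfolding ip_def sum_distrib_left by simp
  also have "\<dots> = (\<Sum>i\<in>I. \<Sum>k\<in>I. if i = k then a i * cnj (b k) else 0)"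
    using o unfolding orthset_def by (intro sum.cong refl) auto
  also have "\<dots> = (\<Sum>i\<in>I. a i * cnj (b i))"
    using fin by (simp add: sum.delta)
  finally show ?thesis .
qed

lemma parseval:
  assumes o: "onb N N u"
  shows "(\<Sum>k<N. (cmod (ip N x (u k)))\<^sup>2) = nrm2 N x"
proof -
  have "complex_of_real (\<Sum>k<N. (cmod (ip N x (u k)))\<^sup>2) = (\<Sum>k<N. ip N x (u k) * cnj (ip N x (u k)))"
    by (rule sum_cmod_sq_c)
  also have "\<dots> = (\<Sum>k<N. \<Sum>r<N. \<Sum>s<N. x r * cnj (x s) * (u k s * cnj (u k r)))"
    unfolding ip_def cnj_sum sum_product by (intro sum.cong refl) (simp add: mult_ac)
  also have "\<dots> = (\<Sum>r<N. \<Sum>s<N. \<Sum>k<N. x r * cnj (x s) * (u k s * cnj (u k r)))"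
    by (rule sum3_swap[symmetric])
  also have "\<dots> = (\<Sum>r<N. \<Sum>s<N. x r * cnj (x s) * (if s = r then 1 else 0))"
    unfolding sum_distrib_left[symmetric] using onb_complete[OF o] by (intro sum.cong refl) simp
  also have "\<dots> = (\<Sum>r<N. x r * cnj (x r))"
    by (intro sum.cong refl) (simp add: if_distrib sum.delta cong: if_cong)
  also have "\<dots> = complex_of_real (nrm2 N x)" unfolding nrm2_c ip_def ..
  finally show ?thesis by (simp only: of_real_eq_iff)
qed

definition ipS :: "'r set \<Rightarrow> ('r \<Rightarrow> complex) \<Rightarrow> ('r \<Rightarrow> complex) \<Rightarrow> complex" where
  "ipS R x y = (\<Sum>r\<in>R. x r * cnj (y r))"

definition nrmS :: "'r set \<Rightarrow> ('r \<Rightarrow> complex) \<Rightarrow> real" where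
  "nrmS R x = (\<Sum>r\<in>R. (cmod (x r))\<^sup>2)"

lemma ip_ipS: "ip N = ipS {..<N}" unfolding ip_def[abs_def] ipS_def[abs_def] by simp
lemma nrm2_nrmS: "nrm2 N = nrmS {..<N}" unfolding nrm2_def[abs_def] nrmS_def[abs_def] by simp

lemma nrmS_c: "complex_of_real (nrmS R x) = ipS R x x"
  unfolding nrmS_def ipS_def by (rule sum_cmod_sq_c)

lemma nrmS_nonneg: "nrmS R x \<ge> 0" unfolding nrmS_def by (simp add: sum_nonneg)

lemma ipS_cnj: "cnj (ipS R x y) = ipS R y x"
  unfolding ipS_def cnj_sum by (simp add: mult.commute)

lemma ipS_diff: "ipS R (\<lambda>r. x r - v r) (\<lambda>r. x r - v r) = ipS R x x - ipS R x v - ipS R v x + ipS R v v"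
  unfolding ipS_def by (simp add: algebra_simps sum_subtractf sum.distrib)

definition orthS :: "'r set \<Rightarrow> 'i set \<Rightarrow> ('i \<Rightarrow> 'r \<Rightarrow> complex) \<Rightarrow> bool" where
  "orthS R I u \<longleftrightarrow> (\<forall>j\<in>I. \<forall>k\<in>I. ipS R (u j) (u k) = (if j = k then 1 else 0))"

lemma ipS_lin_set:
  assumes o: "orthS R I w" and fin: "finite I"
  shows "ipS R (\<lambda>r. \<Sum>i\<in>I. a i * w i r) (\<lambda>r. \<Sum>k\<in>I. b k * w k r) = (\<Sum>i\<in>I. a i * cnj (b i))"
proof -
  have "ipS R (\<lambda>r. \<Sum>i\<in>I. a i * w i r) (\<lambda>r. \<Sum>k\<in>I. b k * w k r)
      = (\<Sum>r\<in>R. \<Sum>i\<in>I. \<Sum>k\<in>I. a i * cnj (b k) * (w i r * cnj (w k r)))"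
    unfolding ipS_def cnj_sum sum_product
    by (intro sum.cong refl) (simp add: mult_ac)
  also have "\<dots> = (\<Sum>i\<in>I. \<Sum>r\<in>R. \<Sum>k\<in>I. a i * cnj (b k) * (w i r * cnj (w k r)))"
    by (rule sum.swap)
  also have "\<dots> = (\<Sum>i\<in>I. \<Sum>k\<in>I. \<Sum>r\<in>R. a i * cnj (b k) * (w i r * cnj (w k r)))"
    by (rule sum.cong[OF refl], rule sum.swap)
  also have "\<dots> = (\<Sum>i\<in>I. \<Sum>k\<in>I. a i * cnj (b k) * ipS R (w i) (w k))"
    unfolding ipS_def sum_distrib_left by simp
  also have "\<dots> = (\<Sum>i\<in>I. \<Sum>k\<in>I. if i = k then a i * cnj (b k) else 0)"
    using o unfolding orthS_def by (intro sum.cong refl) auto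
  also have "\<dots> = (\<Sum>i\<in>I. a i * cnj (b i))"
    using fin by (simp add: sum.delta)
  finally show ?thesis .
qed

lemma besselS:
  assumes o: "orthS R I u" and fin: "finite I"
  shows "(\<Sum>k\<in>I. (cmod (ipS R x (u k)))\<^sup>2) \<le> nrmS R x"
proof -
  define c where "c k = ipS R x (u k)" for k
  define v where "v r = (\<Sum>k\<in>I. c k * u k r)" for r
  define S where "S = (\<Sum>k\<in>I. c k * cnj (c k))"
  have vv: "ipS R v v = S" unfolding v_def S_def by (rule ipS_lin_set[OF o fin])
  have xv: "ipS R x v = S"
  proof -
    have "ipS R x v = (\<Sum>r\<in>R. \<Sum>k\<in>I. cnj (c k) * (x r * cnj (u k r)))"
      unfolding ipS_def v_def cnj_sum sum_distrib_left by (intro sum.cong refl) (simp add: mult_ac)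
    also have "\<dots> = (\<Sum>k\<in>I. cnj (c k) * c k)"
      unfolding c_def ipS_def sum_distrib_left by (rule sum.swap)
    finally show ?thesis unfolding S_def by (simp add: mult.commute)
  qed
  have cS: "cnj S = S" unfolding S_def cnj_sum by (simp add: mult.commute)
  have vx: "ipS R v x = S" using xv ipS_cnj[of R x v] cS by simp
  have "ipS R (\<lambda>r. x r - v r) (\<lambda>r. x r - v r) = ipS R x x - S"
    unfolding ipS_diff vv xv vx by simp
  hence "complex_of_real (nrmS R (\<lambda>r. x r - v r)) = complex_of_real (nrmS R x) - S"
    unfolding nrmS_c by simp
  moreover have "S = complex_of_real (\<Sum>k\<in>I. (cmod (ipS R x (u k)))\<^sup>2)"
    unfolding S_def c_def by (rule sum_cmod_sq_c[symmetric])
  ultimately have "nrmS R (\<lambda>r. x r - v r) = nrmS R x - (\<Sum>k\<in>I. (cmod (ipS R x (u k)))\<^sup>2)"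
    by (metis of_real_diff of_real_eq_iff)
  thus ?thesis using nrmS_nonneg[of R "\<lambda>r. x r - v r"] by simp
qed


definition ens :: "nat \<Rightarrow> 'l set \<Rightarrow> ('l \<Rightarrow> nat \<Rightarrow> complex) \<Rightarrow> complex mat \<Rightarrow> bool" where
  "ens N L psi M \<longleftrightarrow> M \<in> carrier_mat N N \<and> finite L \<and>
     (\<forall>r<N. \<forall>s<N. M $$ (r,s) = (\<Sum>l\<in>L. psi l r * cnj (psi l s)))"

lemma ens_herm: "ens N L psi M \<Longrightarrow> herm N M"
  unfolding ens_def herm_def by (auto simp: cnj_sum mult.commute)

lemma quad_decomp:
  assumes o: "onb N N u" and k: "k < N" and k': "k' < N"
    and d: "\<forall>r<N. \<forall>s<N. M r s = (\<Sum>j<N. of_real (lam j) * u j r * cnj (u j s))"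
  shows "(\<Sum>r<N. \<Sum>s<N. cnj (u k r) * M r s * u k' s) = (if k = k' then of_real (lam k) else 0)"
proof -
  have "(\<Sum>r<N. \<Sum>s<N. cnj (u k r) * M r s * u k' s)
      = (\<Sum>r<N. \<Sum>s<N. \<Sum>j<N. of_real (lam j) * (u j r * cnj (u k r)) * (u k' s * cnj (u j s)))"
    using d by (intro sum.cong refl) (simp add: sum_distrib_left sum_distrib_right mult_ac)
  also have "\<dots> = (\<Sum>j<N. \<Sum>r<N. \<Sum>s<N. of_real (lam j) * (u j r * cnj (u k r)) * (u k' s * cnj (u j s)))"
    by (rule sum3_swap)
  also have "\<dots> = (\<Sum>j<N. of_real (lam j) * ip N (u j) (u k) * ip N (u k') (u j))"
    unfolding ip_def by (intro sum.cong refl) (simp only: prod2_sum)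
  also have "\<dots> = (\<Sum>j<N. if j = k then (if k = k' then of_real (lam k) else 0) else 0)"
    using o k k' unfolding onb_def by (intro sum.cong refl) auto
  also have "\<dots> = (if k = k' then of_real (lam k) else 0)" using k by (simp add: sum.delta)
  finally show ?thesis .
qed

lemma quad_ens:
  assumes e: "ens N L psi M" and k: "k < N" and k': "k' < N"
  shows "(\<Sum>r<N. \<Sum>s<N. cnj (u k r) * M $$ (r,s) * u k' s) =
         (\<Sum>l\<in>L. ip N (psi l) (u k) * cnj (ip N (psi l) (u k')))"
proof -
  have "(\<Sum>r<N. \<Sum>s<N. cnj (u k r) * M $$ (r,s) * u k' s)
      = (\<Sum>r<N. \<Sum>s<N. \<Sum>l\<in>L. (psi l r * cnj (u k r)) * (u k' s * cnj (psi l s)))"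
    using e unfolding ens_def by (intro sum.cong refl) (simp add: sum_distrib_left sum_distrib_right mult_ac)
  also have "\<dots> = (\<Sum>l\<in>L. \<Sum>r<N. \<Sum>s<N. (psi l r * cnj (u k r)) * (u k' s * cnj (psi l s)))"
    by (rule sum3_swap)
  also have "\<dots> = (\<Sum>l\<in>L. ip N (psi l) (u k) * ip N (u k') (psi l))"
    unfolding ip_def by (intro sum.cong refl) (simp only: prod2_sum[where c=1, simplified])
  also have "\<dots> = (\<Sum>l\<in>L. ip N (psi l) (u k) * cnj (ip N (psi l) (u k')))"
    by (simp add: ip_cnj)
  finally show ?thesis .
qed

lemma ens_spec:
  assumes e: "ens N L psi M"
  shows "\<exists>u lam. onb N N u \<and> entropy M = (\<Sum>k<N. eta (lam k)) \<and>
     (\<forall>k<N. \<forall>k'<N. (\<Sum>l\<in>L. ip N (psi l) (u k) * cnj (ip N (psi l) (u k'))) = (if k = k' then of_real (lam k) else 0)) \<and>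
     (\<forall>k<N. lam k = (\<Sum>l\<in>L. (cmod (ip N (psi l) (u k)))\<^sup>2))"
proof -
  have M: "M \<in> carrier_mat N N" using e unfolding ens_def by simp
  obtain u lam where o: "onb N N u" and
    d: "\<forall>r<N. \<forall>s<N. M $$ (r,s) = (\<Sum>k<N. of_real (lam k) * u k r * cnj (u k s))"
    using spectral[OF M ens_herm[OF e]] by blast
  have ent: "entropy M = (\<Sum>k<N. eta (lam k))" by (rule entropy_spec[OF M o d])
  have G: "(\<Sum>l\<in>L. ip N (psi l) (u k) * cnj (ip N (psi l) (u k'))) = (if k = k' then of_real (lam k) else 0)"
    if "k < N" "k' < N" for k k'
    using quad_ens[OF e that, of u] quad_decomp[OF o that, of "\<lambda>r s. M $$ (r,s)" lam] d by simp
  have "lam k = (\<Sum>l\<in>L. (cmod (ip N (psi l) (u k)))\<^sup>2)" if k: "k < N" for k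
  proof -
    have "complex_of_real (lam k) = complex_of_real (\<Sum>l\<in>L. (cmod (ip N (psi l) (u k)))\<^sup>2)"
      unfolding sum_cmod_sq_c using G[OF k k] by simp
    thus ?thesis by (simp only: of_real_eq_iff)
  qed
  thus ?thesis using o ent G by blast
qed

lemma lam_nonneg: "lam k = (\<Sum>l\<in>L. (cmod (f l))\<^sup>2) \<Longrightarrow> lam k \<ge> 0"
  by (simp add: sum_nonneg)

lemma ens_upper:
  assumes e: "ens N L psi M"
  shows "entropy M \<le> (\<Sum>l\<in>L. eta (nrm2 N (psi l)))"
proof -
  obtain u lam where o: "onb N N u" and ent: "entropy M = (\<Sum>k<N. eta (lam k))"
    and G: "\<And>k k'. k < N \<Longrightarrow> k' < N \<Longrightarrow> (\<Sum>l\<in>L. ip N (psi l) (u k) * cnj (ip N (psi l) (u k'))) = (if k = k' then of_real (lam k) else 0)"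
    and lam: "\<And>k. k < N \<Longrightarrow> lam k = (\<Sum>l\<in>L. (cmod (ip N (psi l) (u k)))\<^sup>2)"
    using ens_spec[OF e] by blast
  have finL: "finite L" using e unfolding ens_def by simp
  have lam0: "lam k \<ge> 0" if "k < N" for k using lam[OF that] by (simp add: sum_nonneg)
  define K where "K = {k. k < N \<and> lam k > 0}"
  have finK: "finite K" unfolding K_def by simp
  define S where "S k l = (cmod (ip N (psi l) (u k)))\<^sup>2 / lam k" for k l
  have zero_out: "ip N (psi l) (u k) = 0" if "k < N" "k \<notin> K" "l \<in> L" for k l
  proof -
    have "lam k = 0" using lam0[OF that(1)] that(1,2) unfolding K_def by auto
    hence "(\<Sum>l\<in>L. (cmod (ip N (psi l) (u k)))\<^sup>2) = 0" using lam[OF that(1)] by simp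
    hence "\<forall>l\<in>L. (cmod (ip N (psi l) (u k)))\<^sup>2 = 0" using finL by (subst (asm) sum_nonneg_eq_0_iff) auto
    thus ?thesis using that(3) by simp
  qed
  have ent': "entropy M = (\<Sum>k\<in>K. eta (lam k))"
  proof -
    have "(\<Sum>k<N. eta (lam k)) = (\<Sum>k\<in>K. eta (lam k))"
      by (rule sum.mono_neutral_right) (use lam0 in \<open>force simp: K_def\<close>)+
    thus ?thesis using ent by simp
  qed
  have "(\<Sum>k\<in>K. eta (lam k)) - ln 1 * (\<Sum>l\<in>L. nrm2 N (psi l)) \<le> (\<Sum>l\<in>L. eta (nrm2 N (psi l)))"
  proof (rule gen_jensen[OF finL finK, where S=S])
    show "S k l \<ge> 0" if "k \<in> K" "l \<in> L" for k l unfolding S_def using that lam0 K_def by auto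
    show "lam k \<ge> 0" if "k \<in> K" for k using that lam0 K_def by auto
    show "(\<Sum>l\<in>L. S k l) = 1" if k: "k \<in> K" for k
      using k lam[of k] unfolding S_def K_def by (simp add: sum_divide_distrib[symmetric])
    show "(1::real) > 0" by simp
    show "nrm2 N (psi l) = (\<Sum>k\<in>K. S k l * lam k)" if l: "l \<in> L" for l
    proof -
      have "nrm2 N (psi l) = (\<Sum>k<N. (cmod (ip N (psi l) (u k)))\<^sup>2)" by (rule parseval[OF o, symmetric])
      also have "\<dots> = (\<Sum>k\<in>K. (cmod (ip N (psi l) (u k)))\<^sup>2)"
        by (rule sum.mono_neutral_right) (use zero_out l in \<open>auto simp: K_def\<close>)
      also have "\<dots> = (\<Sum>k\<in>K. S k l * lam k)" unfolding S_def K_def by (intro sum.cong refl) auto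
      finally show ?thesis .
    qed
    show "(\<Sum>k\<in>K. S k l) \<le> 1" if l: "l \<in> L" for l
    proof -
      define x where "x k l' = ip N (psi l') (u k) / of_real (sqrt (lam k))" for k l'
      have ox: "orthS L K x" unfolding orthS_def
      proof (intro ballI)
        fix k k' assume k: "k \<in> K" and k': "k' \<in> K"
        have kN: "k < N" "k' < N" and pos: "lam k > 0" "lam k' > 0" using k k' K_def by auto
        have "ipS L (x k) (x k') = (\<Sum>l\<in>L. ip N (psi l) (u k) * cnj (ip N (psi l) (u k'))) /
               (of_real (sqrt (lam k)) * of_real (sqrt (lam k')))"
          unfolding ipS_def x_def sum_divide_distrib by (intro sum.cong refl) simp
        also have "\<dots> = (if k = k' then 1 else 0)" unfolding G[OF kN]
          using pos by (auto simp: of_real_mult[symmetric] simp del: of_real_mult)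
        finally show "ipS L (x k) (x k') = (if k = k' then 1 else 0)" .
      qed
      define el where "el l' = (if l' = l then (1::complex) else 0)" for l'
      have "(\<Sum>k\<in>K. (cmod (ipS L el (x k)))\<^sup>2) \<le> nrmS L el" by (rule besselS[OF ox finK])
      also have "nrmS L el = 1"
      proof -
        have "nrmS L el = (\<Sum>r\<in>L. if r = l then 1 else 0)"
          unfolding nrmS_def el_def by (intro sum.cong refl) auto
        thus ?thesis using l finL by simp
      qed
      also have "(\<Sum>k\<in>K. (cmod (ipS L el (x k)))\<^sup>2) = (\<Sum>k\<in>K. S k l)"
      proof (intro sum.cong refl)
        fix k assume k: "k \<in> K"
        have "ipS L el (x k) = (\<Sum>r\<in>L. if r = l then cnj (x k r) else 0)"
          unfolding ipS_def el_def by (intro sum.cong refl) auto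
        hence "ipS L el (x k) = cnj (x k l)" using l finL by simp
        hence "(cmod (ipS L el (x k)))\<^sup>2 = (cmod (ip N (psi l) (u k)))\<^sup>2 / (sqrt (lam k))\<^sup>2"
          unfolding x_def by (simp add: norm_divide power_divide)
        also have "\<dots> = S k l" unfolding S_def using k K_def by simp
        finally show "(cmod (ipS L el (x k)))\<^sup>2 = S k l" .
      qed
      finally show ?thesis .
    qed
  qed
  thus ?thesis using ent' by simp
qed

lemma nrm2_zero: "nrm2 N x = 0 \<Longrightarrow> r < N \<Longrightarrow> x r = 0"
  unfolding nrm2_def by (subst (asm) sum_nonneg_eq_0_iff) auto

lemma ens_lower:
  assumes e: "ens N L psi M"
    and orth: "\<And>l l'. l \<in> L \<Longrightarrow> l' \<in> L \<Longrightarrow> l \<noteq> l' \<Longrightarrow> ip N (psi l) (psi l') = 0"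
  shows "(\<Sum>l\<in>L. eta (nrm2 N (psi l))) \<le> entropy M"
proof -
  obtain u lam where o: "onb N N u" and ent: "entropy M = (\<Sum>k<N. eta (lam k))"
    and lam: "\<And>k. k < N \<Longrightarrow> lam k = (\<Sum>l\<in>L. (cmod (ip N (psi l) (u k)))\<^sup>2)"
    using ens_spec[OF e] by blast
  have finL: "finite L" using e unfolding ens_def by simp
  define p where "p l = nrm2 N (psi l)" for l
  define K where "K = {l \<in> L. p l > 0}"
  have finK: "finite K" unfolding K_def using finL by simp
  have p0: "p l \<ge> 0" for l unfolding p_def by (rule nrm2_nonneg)
  have zero_out: "ip N (psi l) y = 0" if "l \<in> L" "l \<notin> K" for l y
  proof -
    have "p l = 0" using p0[of l] that K_def by auto
    hence "\<forall>r<N. psi l r = 0" using nrm2_zero unfolding p_def by blast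
    thus ?thesis unfolding ip_def by simp
  qed
  define S where "S l k = (cmod (ip N (psi l) (u k)))\<^sup>2 / p l" for l k
  have "(\<Sum>l\<in>K. eta (p l)) - ln 1 * (\<Sum>k\<in>{..<N}. lam k) \<le> (\<Sum>k\<in>{..<N}. eta (lam k))"
  proof (rule gen_jensen[OF _ finK, where S=S])
    show "finite {..<N}" by simp
    show "S l k \<ge> 0" if "l \<in> K" for l k unfolding S_def using p0 by simp
    show "p l \<ge> 0" for l by (rule p0)
    show "(1::real) > 0" by simp
    show "(\<Sum>k\<in>{..<N}. S l k) = 1" if l: "l \<in> K" for l
    proof -
      have "(\<Sum>k\<in>{..<N}. S l k) = (\<Sum>k<N. (cmod (ip N (psi l) (u k)))\<^sup>2) / p l"
        unfolding S_def by (simp add: sum_divide_distrib)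
      also have "\<dots> = 1" unfolding parseval[OF o] using l K_def p_def by simp
      finally show ?thesis .
    qed
    show "lam k = (\<Sum>l\<in>K. S l k * p l)" if k: "k \<in> {..<N}" for k
    proof -
      have "lam k = (\<Sum>l\<in>L. (cmod (ip N (psi l) (u k)))\<^sup>2)" using lam k by simp
      also have "\<dots> = (\<Sum>l\<in>K. (cmod (ip N (psi l) (u k)))\<^sup>2)"
        by (rule sum.mono_neutral_right) (use zero_out finL in \<open>auto simp: K_def\<close>)
      also have "\<dots> = (\<Sum>l\<in>K. S l k * p l)" unfolding S_def K_def by (intro sum.cong refl) auto
      finally show ?thesis .
    qed
    show "(\<Sum>l\<in>K. S l k) \<le> 1" if k: "k \<in> {..<N}" for k
    proof -
      define x where "x l r = psi l r / of_real (sqrt (p l))" for l r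
      have ox: "orthS {..<N} K x" unfolding orthS_def
      proof (intro ballI)
        fix l l' assume l: "l \<in> K" and l': "l' \<in> K"
        have pos: "p l > 0" "p l' > 0" using l l' K_def by auto
        have "ipS {..<N} (x l) (x l') = ip N (psi l) (psi l') / (of_real (sqrt (p l)) * of_real (sqrt (p l')))"
          unfolding ipS_def ip_def x_def sum_divide_distrib by (intro sum.cong refl) simp
        also have "\<dots> = (if l = l' then 1 else 0)"
        proof (cases "l = l'")
          case True
          have "ip N (psi l) (psi l) = of_real (p l)" unfolding p_def nrm2_c ..
          thus ?thesis using True pos by (simp add: of_real_mult[symmetric] del: of_real_mult)
        next
          case False thus ?thesis using orth l l' K_def by auto
        qed
        finally show "ipS {..<N} (x l) (x l') = (if l = l' then 1 else 0)" .
      qed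
      have "(\<Sum>l\<in>K. (cmod (ipS {..<N} (u k) (x l)))\<^sup>2) \<le> nrmS {..<N} (u k)" by (rule besselS[OF ox finK])
      also have "nrmS {..<N} (u k) = 1"
      proof -
        have "complex_of_real (nrmS {..<N} (u k)) = 1" unfolding nrmS_c ip_ipS[symmetric]
          using o k unfolding onb_def by simp
        thus ?thesis by (simp only: of_real_eq_1_iff)
      qed
      also have "(\<Sum>l\<in>K. (cmod (ipS {..<N} (u k) (x l)))\<^sup>2) = (\<Sum>l\<in>K. S l k)"
      proof (intro sum.cong refl)
        fix l assume l: "l \<in> K"
        have "ipS {..<N} (u k) (x l) = ip N (u k) (psi l) / of_real (sqrt (p l))"
          unfolding ipS_def ip_def x_def sum_divide_distrib by (intro sum.cong refl) simp
        also have "ip N (u k) (psi l) = cnj (ip N (psi l) (u k))" by (simp add: ip_cnj)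
        finally have "(cmod (ipS {..<N} (u k) (x l)))\<^sup>2 = (cmod (ip N (psi l) (u k)))\<^sup>2 / (sqrt (p l))\<^sup>2"
          by (simp add: norm_divide power_divide)
        also have "\<dots> = S l k" unfolding S_def using l K_def by simp
        finally show "(cmod (ipS {..<N} (u k) (x l)))\<^sup>2 = S l k" .
      qed
      finally show ?thesis .
    qed
  qed
  moreover have "(\<Sum>l\<in>L. eta (p l)) = (\<Sum>l\<in>K. eta (p l))"
  proof (rule sum.mono_neutral_right)
    show "\<forall>i\<in>L - K. eta (p i) = 0"
    proof
      fix i assume "i \<in> L - K"
      hence "p i = 0" using p0[of i] K_def by auto
      thus "eta (p i) = 0" by simp
    qed
  qed (use finL K_def in auto)
  ultimately show ?thesis using ent unfolding p_def by (simp add: atLeast0LessThan)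
qed


lemma reindex_bij:
  assumes b: "bij_betw (\<lambda>(i,r). phi i r) (I \<times> {..<M}) {..<N}" and fin: "finite I"
  shows "(\<Sum>t<N. f t) = (\<Sum>i\<in>I. \<Sum>r<M. f (phi i r))"
proof -
  have "(\<Sum>t<N. f t) = (\<Sum>x\<in>I \<times> {..<M}. f ((\<lambda>(i,r). phi i r) x))"
    using sum.reindex_bij_betw[OF b, of f] by simp
  also have "\<dots> = (\<Sum>i\<in>I. \<Sum>r<M. f (phi i r))"
    unfolding sum.cartesian_product by (intro sum.cong refl) auto
  finally show ?thesis .
qed

lemma bij_lt: "bij_betw (\<lambda>(i,r). phi i r) (I \<times> {..<M}) {..<N} \<Longrightarrow> i \<in> I \<Longrightarrow> r < M \<Longrightarrow> phi i r < N"
  unfolding bij_betw_def by auto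

lemma ptrace_ens:
  assumes e: "ens N L psi S"
    and b: "bij_betw (\<lambda>(i,r). phi i r) (I \<times> {..<M}) {..<N}" and finI: "finite I"
    and R: "R \<in> carrier_mat M M"
    and Rd: "\<And>r s. r < M \<Longrightarrow> s < M \<Longrightarrow> R $$ (r,s) = (\<Sum>i\<in>I. S $$ (phi i r, phi i s))"
  shows "ens M (L \<times> I) (\<lambda>(l,i) r. psi l (phi i r)) R"
  unfolding ens_def
proof (intro conjI allI impI)
  show "R \<in> carrier_mat M M" by fact
  show "finite (L \<times> I)" using e finI unfolding ens_def by simp
  fix r s assume r: "r < M" and s: "s < M"
  have "R $$ (r,s) = (\<Sum>i\<in>I. \<Sum>l\<in>L. psi l (phi i r) * cnj (psi l (phi i s)))"
    unfolding Rd[OF r s] using e bij_lt[OF b _ r] bij_lt[OF b _ s] unfolding ens_def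
    by (intro sum.cong refl) auto
  also have "\<dots> = (\<Sum>l\<in>L. \<Sum>i\<in>I. psi l (phi i r) * cnj (psi l (phi i s)))" by (rule sum.swap)
  also have "\<dots> = (\<Sum>x\<in>L \<times> I. (case x of (l,i) \<Rightarrow> \<lambda>r. psi l (phi i r)) r * cnj ((case x of (l,i) \<Rightarrow> \<lambda>r. psi l (phi i r)) s))"
    unfolding sum.cartesian_product by (intro sum.cong refl) auto
  finally show "R $$ (r,s) = (\<Sum>x\<in>L \<times> I. (case x of (l,i) \<Rightarrow> \<lambda>r. psi l (phi i r)) r * cnj ((case x of (l,i) \<Rightarrow> \<lambda>r. psi l (phi i r)) s))" .
qed

lemma sum_prod_set: "(\<Sum>x\<in>A \<times> B. f x) = (\<Sum>i\<in>A. \<Sum>r\<in>B. f (i,r))"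
  unfolding sum.cartesian_product by simp

lemma ptrace_bound:
  assumes e: "ens N L psi S"
    and orth: "\<And>l l'. l \<in> L \<Longrightarrow> l' \<in> L \<Longrightarrow> l \<noteq> l' \<Longrightarrow> ip N (psi l) (psi l') = 0"
    and b: "bij_betw (\<lambda>(i,r). phi i r) (I \<times> {..<M}) {..<N}" and finI: "finite I" and Ine: "I \<noteq> {}"
    and R: "R \<in> carrier_mat M M"
    and Rd: "\<And>r s. r < M \<Longrightarrow> s < M \<Longrightarrow> R $$ (r,s) = (\<Sum>i\<in>I. S $$ (phi i r, phi i s))"
  shows "(\<Sum>l\<in>L. eta (nrm2 N (psi l))) - ln (real (card I)) * (\<Sum>l\<in>L. nrm2 N (psi l)) \<le> entropy R"
proof -
  have finL: "finite L" using e unfolding ens_def by simp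
  have eR: "ens M (L \<times> I) (\<lambda>(l,i) r. psi l (phi i r)) R" by (rule ptrace_ens[OF e b finI R Rd])
  obtain g nu where o: "onb M M g" and ent: "entropy R = (\<Sum>k<M. eta (nu k))"
    and nu0: "\<And>k. k < M \<Longrightarrow> nu k = (\<Sum>x\<in>L \<times> I. (cmod (ip M ((\<lambda>(l,i) r. psi l (phi i r)) x) (g k)))\<^sup>2)"
    using ens_spec[OF eR] by blast
  define Q where "Q l i k = (cmod (ip M (\<lambda>r. psi l (phi i r)) (g k)))\<^sup>2" for l i k
  have nu: "nu k = (\<Sum>l\<in>L. \<Sum>i\<in>I. Q l i k)" if "k < M" for k
    unfolding nu0[OF that] sum_prod_set Q_def by simp
  define p where "p l = nrm2 N (psi l)" for l
  define K where "K = {l \<in> L. p l > 0}"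
  have finK: "finite K" unfolding K_def using finL by simp
  have p0: "p l \<ge> 0" for l unfolding p_def by (rule nrm2_nonneg)
  have pnorm: "p l = (\<Sum>i\<in>I. nrm2 M (\<lambda>r. psi l (phi i r)))" for l
    unfolding p_def nrm2_def by (rule reindex_bij[OF b finI])
  have zero_out: "Q l i k = 0" if "l \<in> L" "l \<notin> K" "i \<in> I" for l i k
  proof -
    have "p l = 0" using p0[of l] that K_def by auto
    hence "\<forall>t<N. psi l t = 0" using nrm2_zero unfolding p_def by blast
    hence "\<forall>r<M. psi l (phi i r) = 0" using bij_lt[OF b that(3)] by auto
    thus ?thesis unfolding Q_def ip_def by simp
  qed
  define Sm where "Sm l k = (\<Sum>i\<in>I. Q l i k) / p l" for l k
  have rows: "(\<Sum>k\<in>{..<M}. Sm l k) = 1" if l: "l \<in> K" for l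
  proof -
    have "(\<Sum>k\<in>{..<M}. Sm l k) = (\<Sum>i\<in>I. \<Sum>k<M. Q l i k) / p l"
      unfolding Sm_def sum_divide_distrib[symmetric] by (subst sum.swap) simp
    also have "\<dots> = (\<Sum>i\<in>I. nrm2 M (\<lambda>r. psi l (phi i r))) / p l"
      unfolding Q_def using parseval[OF o] by simp
    also have "\<dots> = 1" using pnorm[of l] l K_def by simp
    finally show ?thesis .
  qed
  have nuK: "nu k = (\<Sum>l\<in>K. Sm l k * p l)" if k: "k \<in> {..<M}" for k
  proof -
    have "nu k = (\<Sum>l\<in>L. \<Sum>i\<in>I. Q l i k)" using nu k by simp
    also have "\<dots> = (\<Sum>l\<in>K. \<Sum>i\<in>I. Q l i k)"
      by (rule sum.mono_neutral_right) (use zero_out finL in \<open>auto simp: K_def\<close>)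
    also have "\<dots> = (\<Sum>l\<in>K. Sm l k * p l)" unfolding Sm_def K_def by (intro sum.cong refl) auto
    finally show ?thesis .
  qed
  have "(\<Sum>l\<in>K. eta (p l)) - ln (real (card I)) * (\<Sum>k\<in>{..<M}. nu k) \<le> (\<Sum>k\<in>{..<M}. eta (nu k))"
  proof (rule gen_jensen[OF _ finK, where S=Sm])
    show "finite {..<M}" by simp
    show "Sm l k \<ge> 0" if "l \<in> K" for l k unfolding Sm_def Q_def using p0 by (simp add: sum_nonneg)
    show "p l \<ge> 0" for l by (rule p0)
    show "real (card I) > 0" using finI Ine by (simp add: card_gt_0_iff)
    show "(\<Sum>k\<in>{..<M}. Sm l k) = 1" if "l \<in> K" for l using rows that .
    show "nu k = (\<Sum>l\<in>K. Sm l k * p l)" if "k \<in> {..<M}" for k using nuK that .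
    show "(\<Sum>l\<in>K. Sm l k) \<le> real (card I)" if k: "k \<in> {..<M}" for k
    proof -
      define R0 where "R0 = I \<times> {..<M}"
      define x where "x l = (\<lambda>(i',r). psi l (phi i' r) / of_real (sqrt (p l)))" for l
      have ox: "orthS R0 K x" unfolding orthS_def
      proof (intro ballI)
        fix l l' assume l: "l \<in> K" and l': "l' \<in> K"
        have pos: "p l > 0" "p l' > 0" using l l' K_def by auto
        have "ipS R0 (x l) (x l') = (\<Sum>i\<in>I. \<Sum>r<M. psi l (phi i r) * cnj (psi l' (phi i r))) /
             (of_real (sqrt (p l)) * of_real (sqrt (p l')))"
          unfolding ipS_def R0_def sum_prod_set x_def sum_divide_distrib by (intro sum.cong refl) simp
        also have "(\<Sum>i\<in>I. \<Sum>r<M. psi l (phi i r) * cnj (psi l' (phi i r))) = ip N (psi l) (psi l')"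
          unfolding ip_def by (rule reindex_bij[OF b finI, symmetric])
        also have "ip N (psi l) (psi l') / (of_real (sqrt (p l)) * of_real (sqrt (p l'))) = (if l = l' then 1 else 0)"
        proof (cases "l = l'")
          case True
          have "ip N (psi l) (psi l) = of_real (p l)" unfolding p_def nrm2_c ..
          thus ?thesis using True pos by (simp add: of_real_mult[symmetric] del: of_real_mult)
        next
          case False thus ?thesis using orth l l' K_def by auto
        qed
        finally show "ipS R0 (x l) (x l') = (if l = l' then 1 else 0)" .
      qed
      have per_i: "(\<Sum>l\<in>K. Q l i k / p l) \<le> 1" if i: "i \<in> I" for i
      proof -
        define Gv where "Gv = (\<lambda>(i',r). if i' = i then g k r else 0)"
        have "(\<Sum>l\<in>K. (cmod (ipS R0 Gv (x l)))\<^sup>2) \<le> nrmS R0 Gv" by (rule besselS[OF ox finK])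
        also have "nrmS R0 Gv = nrm2 M (g k)"
        proof -
          have "nrmS R0 Gv = (\<Sum>i'\<in>I. if i' = i then nrm2 M (g k) else 0)"
            unfolding nrmS_def R0_def sum_prod_set Gv_def nrm2_def by (intro sum.cong refl) auto
          thus ?thesis using i finI by simp
        qed
        also have "nrm2 M (g k) = 1"
        proof -
          have "complex_of_real (nrm2 M (g k)) = 1" unfolding nrm2_c using o k unfolding onb_def by simp
          thus ?thesis by (simp only: of_real_eq_1_iff)
        qed
        also have "(\<Sum>l\<in>K. (cmod (ipS R0 Gv (x l)))\<^sup>2) = (\<Sum>l\<in>K. Q l i k / p l)"
        proof (intro sum.cong refl)
          fix l assume l: "l \<in> K"
          have "ipS R0 Gv (x l) = (\<Sum>i'\<in>I. if i' = i then ip M (g k) (\<lambda>r. psi l (phi i r)) / of_real (sqrt (p l)) else 0)"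
            unfolding ipS_def R0_def sum_prod_set Gv_def x_def ip_def sum_divide_distrib
            by (intro sum.cong refl) auto
          also have "\<dots> = ip M (g k) (\<lambda>r. psi l (phi i r)) / of_real (sqrt (p l))" using i finI by simp
          also have "ip M (g k) (\<lambda>r. psi l (phi i r)) = cnj (ip M (\<lambda>r. psi l (phi i r)) (g k))"
            by (simp add: ip_cnj)
          finally have "(cmod (ipS R0 Gv (x l)))\<^sup>2 = Q l i k / (sqrt (p l))\<^sup>2"
            unfolding Q_def by (simp add: norm_divide power_divide)
          also have "\<dots> = Q l i k / p l" using l K_def by simp
          finally show "(cmod (ipS R0 Gv (x l)))\<^sup>2 = Q l i k / p l" .
        qed
        finally show ?thesis .
      qed
      have "(\<Sum>l\<in>K. Sm l k) = (\<Sum>i\<in>I. \<Sum>l\<in>K. Q l i k / p l)"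
        unfolding Sm_def sum_divide_distrib by (rule sum.swap)
      also have "\<dots> \<le> (\<Sum>i\<in>I. 1)" by (rule sum_mono) (rule per_i)
      finally show ?thesis by simp
    qed
  qed
  moreover have "(\<Sum>k\<in>{..<M}. nu k) = (\<Sum>l\<in>L. p l)"
  proof -
    have "(\<Sum>k\<in>{..<M}. nu k) = (\<Sum>k\<in>{..<M}. \<Sum>l\<in>K. Sm l k * p l)" using nuK by simp
    also have "\<dots> = (\<Sum>l\<in>K. (\<Sum>k\<in>{..<M}. Sm l k) * p l)"
      unfolding sum_distrib_right by (rule sum.swap)
    also have "\<dots> = (\<Sum>l\<in>K. p l)" using rows by simp
    also have "\<dots> = (\<Sum>l\<in>L. p l)"
    proof (rule sum.mono_neutral_left)
      show "\<forall>i\<in>L - K. p i = 0"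
      proof
        fix i assume "i \<in> L - K" thus "p i = 0" using p0[of i] K_def by auto
      qed
    qed (use finL K_def in auto)
    finally show ?thesis .
  qed
  moreover have "(\<Sum>l\<in>L. eta (p l)) = (\<Sum>l\<in>K. eta (p l))"
  proof (rule sum.mono_neutral_right)
    show "\<forall>i\<in>L - K. eta (p i) = 0"
    proof
      fix i assume "i \<in> L - K"
      hence "p i = 0" using p0[of i] K_def by auto
      thus "eta (p i) = 0" by simp
    qed
  qed (use finL K_def in auto)
  ultimately show ?thesis using ent unfolding p_def by simp
qed


lemma adjoint_entry: "A \<in> carrier_mat n n \<Longrightarrow> i < n \<Longrightarrow> j < n \<Longrightarrow> mat_adjoint A $$ (i,j) = cnj (A $$ (j,i))"
  unfolding mat_adjoint_def by (simp add: mat_of_rows_def)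

lemma density_herm: "density n A \<Longrightarrow> herm n A"
  unfolding density_def herm_def by (metis adjoint_entry)

lemma density_ens:
  assumes d: "density N S"
  shows "\<exists>psi. ens N {..<N} psi S \<and>
     (\<forall>l<N. \<forall>l'<N. l \<noteq> l' \<longrightarrow> ip N (psi l) (psi l') = 0) \<and> (\<Sum>l<N. nrm2 N (psi l)) = 1"
proof -
  have S: "S \<in> carrier_mat N N" using d unfolding density_def by simp
  obtain u lam where o: "onb N N u" and
    dc: "\<forall>r<N. \<forall>s<N. S $$ (r,s) = (\<Sum>k<N. of_real (lam k) * u k r * cnj (u k s))"
    using spectral[OF S density_herm[OF d]] by blast
  have lam0: "lam k \<ge> 0" if k: "k < N" for k
  proof -
    define v where "v = vec N (u k)"
    have v: "v \<in> carrier_vec N" unfolding v_def by simp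
    have Sv: "(S *\<^sub>v v) $ r = of_real (lam k) * u k r" if r: "r < N" for r
    proof -
      have "(S *\<^sub>v v) $ r = (\<Sum>s<N. S $$ (r,s) * u k s)"
        using S r unfolding v_def by (simp add: scalar_prod_def atLeast0LessThan)
      also have "\<dots> = (\<Sum>s<N. \<Sum>j<N. of_real (lam j) * u j r * (u k s * cnj (u j s)))"
        using dc r by (intro sum.cong refl) (simp add: sum_distrib_left sum_distrib_right mult_ac)
      also have "\<dots> = (\<Sum>j<N. of_real (lam j) * u j r * ip N (u k) (u j))"
        unfolding ip_def sum_distrib_left by (rule sum.swap)
      also have "\<dots> = (\<Sum>j<N. if j = k then of_real (lam k) * u k r else 0)"
        using o k unfolding onb_def by (intro sum.cong refl) auto
      also have "\<dots> = of_real (lam k) * u k r" using k by simp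
      finally show ?thesis .
    qed
    have "(S *\<^sub>v v) \<bullet>c v = (\<Sum>r<N. of_real (lam k) * (u k r * cnj (u k r)))"
      using S Sv unfolding v_def by (simp add: scalar_prod_def atLeast0LessThan mult.assoc)
    also have "\<dots> = of_real (lam k)" using o k unfolding onb_def ip_def sum_distrib_left[symmetric] by simp
    finally have "(S *\<^sub>v v) \<bullet>c v = of_real (lam k)" .
    moreover have "0 \<le> Re ((S *\<^sub>v v) \<bullet>c v)" using d v unfolding density_def by blast
    ultimately show ?thesis by simp
  qed
  have tr: "(\<Sum>k<N. lam k) = 1"
  proof -
    have "mtrace S = (\<Sum>r<N. \<Sum>k<N. of_real (lam k) * (u k r * cnj (u k r)))"
      unfolding mtrace_def using S dc by (intro sum.cong) (auto simp: mult.assoc)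
    also have "\<dots> = (\<Sum>k<N. of_real (lam k) * ip N (u k) (u k))"
      unfolding ip_def sum_distrib_left by (rule sum.swap)
    also have "\<dots> = (\<Sum>k<N. of_real (lam k))" using o unfolding onb_def by simp
    finally have "complex_of_real (\<Sum>k<N. lam k) = 1" using d unfolding density_def by simp
    thus ?thesis by (simp only: of_real_eq_1_iff)
  qed
  define psi where "psi k r = of_real (sqrt (lam k)) * u k r" for k r
  have ipp: "ip N (psi l) (psi l') = of_real (sqrt (lam l) * sqrt (lam l')) * ip N (u l) (u l')" for l l'
    unfolding ip_def psi_def sum_distrib_left by (intro sum.cong refl) (simp add: mult_ac)
  have "ens N {..<N} psi S" unfolding ens_def
  proof (intro conjI allI impI)
    fix r s assume r: "r < N" and s: "s < N"
    show "S $$ (r,s) = (\<Sum>l\<in>{..<N}. psi l r * cnj (psi l s))"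
      unfolding dc[rule_format, OF r s] psi_def
    proof (intro sum.cong refl)
      fix k assume "k \<in> {..<N}"
      hence "sqrt (lam k) * sqrt (lam k) = lam k" using lam0 by simp
      hence "of_real (sqrt (lam k)) * of_real (sqrt (lam k)) = (of_real (lam k) :: complex)"
        by (metis of_real_mult)
      thus "of_real (lam k) * u k r * cnj (u k s) = of_real (sqrt (lam k)) * u k r * cnj (of_real (sqrt (lam k)) * u k s)"
        by (simp add: mult_ac)
    qed
  qed (use S in auto)
  moreover have "\<forall>l<N. \<forall>l'<N. l \<noteq> l' \<longrightarrow> ip N (psi l) (psi l') = 0"
    using o unfolding ipp onb_def by simp
  moreover have "(\<Sum>l<N. nrm2 N (psi l)) = 1"
  proof -
    have "nrm2 N (psi l) = lam l" if "l < N" for l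
    proof -
      have "complex_of_real (nrm2 N (psi l)) = of_real (lam l)"
        unfolding nrm2_c ipp using o that lam0[OF that] unfolding onb_def by simp
      thus ?thesis by (simp only: of_real_eq_iff)
    qed
    thus ?thesis using tr by simp
  qed
  ultimately show ?thesis by blast
qed


lemma eta_split:
  assumes P: "P > 0" and w: "w \<ge> 0"
  shows "eta (P * w) = w * eta P + P * eta w"
proof (cases "w = 0")
  case True thus ?thesis by simp
next
  case False
  hence "w > 0" using w by simp
  thus ?thesis using P unfolding eta_def by (simp add: ln_mult algebra_simps)
qed

lemma eta_sum_le_ln:
  assumes fin: "finite I" and Ine: "I \<noteq> {}" and w: "\<And>t. t \<in> I \<Longrightarrow> w t \<ge> 0" and ws: "(\<Sum>t\<in>I. w t) = 1"
  shows "(\<Sum>t\<in>I. eta (w t)) \<le> ln (real (card I))"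
proof -
  define n where "n = real (card I)"
  have n: "n > 0" unfolding n_def using fin Ine by (simp add: card_gt_0_iff)
  have "(\<Sum>t\<in>I. eta (w t)) \<le> (\<Sum>t\<in>I. - w t * ln (1/n) + 1/n - w t)"
    using eta_tangent[OF w] n by (intro sum_mono) auto
  also have "\<dots> = (\<Sum>t\<in>I. w t) * ln n + card I * (1/n) - (\<Sum>t\<in>I. w t)"
    using n by (simp add: sum_subtractf sum.distrib sum_distrib_right ln_div)
  also have "\<dots> = ln n" using ws n unfolding n_def by simp
  finally show ?thesis unfolding n_def .
qed

lemma mix_bound_one:
  assumes fin: "finite I" and Ine: "I \<noteq> {}" and q: "\<And>t. t \<in> I \<Longrightarrow> q t \<ge> 0"
  shows "(\<Sum>t\<in>I. eta (q t)) \<le> eta (\<Sum>t\<in>I. q t) + (\<Sum>t\<in>I. q t) * ln (real (card I))"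
proof -
  define P where "P = (\<Sum>t\<in>I. q t)"
  have P0: "P \<ge> 0" unfolding P_def using q by (simp add: sum_nonneg)
  show ?thesis
  proof (cases "P = 0")
    case True
    hence "\<forall>t\<in>I. q t = 0" using fin q unfolding P_def by (subst (asm) sum_nonneg_eq_0_iff) auto
    thus ?thesis by simp
  next
    case False
    hence Pp: "P > 0" using P0 by simp
    define w where "w t = q t / P" for t
    have w0: "w t \<ge> 0" if "t \<in> I" for t unfolding w_def using q[OF that] Pp by simp
    have ws: "(\<Sum>t\<in>I. w t) = 1" unfolding w_def sum_divide_distrib[symmetric] P_def[symmetric] using Pp by simp
    have "(\<Sum>t\<in>I. eta (q t)) = (\<Sum>t\<in>I. w t * eta P + P * eta (w t))"
    proof (intro sum.cong refl)
      fix t assume t: "t \<in> I"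
      have "q t = P * w t" unfolding w_def using Pp by simp
      thus "eta (q t) = w t * eta P + P * eta (w t)" using eta_split[OF Pp w0[OF t]] by simp
    qed
    also have "\<dots> = eta P + P * (\<Sum>t\<in>I. eta (w t))"
      using ws by (simp add: sum.distrib sum_distrib_left sum_distrib_right[symmetric])
    also have "\<dots> \<le> eta P + P * ln (real (card I))"
      using eta_sum_le_ln[OF fin Ine w0 ws] Pp by simp
    finally show ?thesis unfolding P_def .
  qed
qed

lemma lin_idx: "x < m \<Longrightarrow> y < n \<Longrightarrow> x * n + y < m * (n::nat)"
proof -
  assume "x < m" "y < n"
  hence "x * n + y < Suc x * n" by simp
  also have "\<dots> \<le> m * n" using \<open>x < m\<close> by (intro mult_le_mono1) simp
  finally show ?thesis .
qed

lemma lin_div: "y < (n::nat) \<Longrightarrow> (x*n+y) div n = x" by simp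
lemma lin_mod: "y < (n::nat) \<Longrightarrow> (x*n+y) mod n = y" by simp

lemma idx_BC: "idx3 b c i (r div c) (r mod c) = i * (b*c) + r"
proof -
  have "(i*b + r div c)*c + r mod c = i*(b*c) + (r div c * c + r mod c)" by (simp add: algebra_simps)
  thus ?thesis unfolding idx3_def by simp
qed

lemma bij_BC: "bij_betw (\<lambda>(i,r). idx3 b c i (r div c) (r mod c)) ({..<a} \<times> {..<b*c}) {..<a*b*c}"
proof (rule bij_betw_byWitness[where f'="\<lambda>t. (t div (b*c), t mod (b*c))"])
  show "\<forall>x\<in>{..<a} \<times> {..<b*c}. ((case x of (i,r) \<Rightarrow> idx3 b c i (r div c) (r mod c)) div (b*c),
         (case x of (i,r) \<Rightarrow> idx3 b c i (r div c) (r mod c)) mod (b*c)) = x"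
    unfolding idx_BC by (auto simp: lin_div lin_mod)
  show "\<forall>t\<in>{..<a*b*c}. (case (t div (b*c), t mod (b*c)) of (i,r) \<Rightarrow> idx3 b c i (r div c) (r mod c)) = t"
  proof
    fix t :: nat
    have "t div (b*c) * (b*c) + t mod (b*c) = t" by (rule div_mult_mod_eq)
    thus "(case (t div (b*c), t mod (b*c)) of (i,r) \<Rightarrow> idx3 b c i (r div c) (r mod c)) = t"
      unfolding idx_BC prod.case .
  qed
  show "(\<lambda>(i,r). idx3 b c i (r div c) (r mod c)) ` ({..<a} \<times> {..<b*c}) \<subseteq> {..<a*b*c}"
    unfolding idx_BC using lin_idx[of _ a _ "b*c"] by (auto simp: mult.assoc)
  show "(\<lambda>t. (t div (b*c), t mod (b*c))) ` {..<a*b*c} \<subseteq> {..<a} \<times> {..<b*c}"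
  proof
    fix x assume "x \<in> (\<lambda>t. (t div (b*c), t mod (b*c))) ` {..<a*b*c}"
    then obtain t where t: "t < a*b*c" and x: "x = (t div (b*c), t mod (b*c))" by auto
    have "t < a*(b*c)" using t by (simp add: mult.assoc)
    hence "b*c > 0" by (metis gr0I mult_0_right not_less0)
    moreover have "t div (b*c) < a" using t by (simp add: less_mult_imp_div_less mult.assoc)
    ultimately show "x \<in> {..<a} \<times> {..<b*c}" using x by simp
  qed
qed

lemma pos_of_lt: "t < x * (y::nat) \<Longrightarrow> y > 0" by (metis gr0I mult_0_right not_less0)

lemma bij_AC: "bij_betw (\<lambda>(j,r). idx3 b c (r div c) j (r mod c)) ({..<b} \<times> {..<a*c}) {..<a*b*c}"
proof (rule bij_betw_byWitness[where f'="\<lambda>t. ((t div c) mod b, (t div c div b)*c + t mod c)"])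
  show "\<forall>x\<in>{..<b} \<times> {..<a*c}. (\<lambda>t. ((t div c) mod b, (t div c div b)*c + t mod c))
           ((\<lambda>(j,r). idx3 b c (r div c) j (r mod c)) x) = x"
  proof
    fix x assume x: "x \<in> {..<b} \<times> {..<a*c}"
    then obtain j r where xjr: "x = (j,r)" and j: "j < b" and r: "r < a*c" by auto
    have c0: "c > 0" using pos_of_lt[OF r] .
    define t where "t = idx3 b c (r div c) j (r mod c)"
    have m: "r mod c < c" using c0 by simp
    have t1: "t div c = r div c * b + j" unfolding t_def idx3_def using lin_div[OF m] by simp
    have t2: "t mod c = r mod c" unfolding t_def idx3_def using lin_mod[OF m] by simp
    have t3: "(t div c) mod b = j" unfolding t1 using lin_mod[OF j] by simp
    have t4: "(t div c) div b = r div c" unfolding t1 using lin_div[OF j] by simp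
    show "(\<lambda>t. ((t div c) mod b, (t div c div b)*c + t mod c)) ((\<lambda>(j,r). idx3 b c (r div c) j (r mod c)) x) = x"
      unfolding xjr prod.case t_def[symmetric] using t2 t3 t4 div_mult_mod_eq[of r c] by simp
  qed
  show "\<forall>t\<in>{..<a*b*c}. (\<lambda>(j,r). idx3 b c (r div c) j (r mod c)) ((t div c) mod b, (t div c div b)*c + t mod c) = t"
  proof
    fix t assume t: "t \<in> {..<a*b*c}"
    have c0: "c > 0" using t pos_of_lt[of t "a*b" c] by simp
    have m: "t mod c < c" using c0 by simp
    have e1: "((t div c div b)*c + t mod c) div c = t div c div b" using lin_div[OF m] .
    have e2: "((t div c div b)*c + t mod c) mod c = t mod c" using lin_mod[OF m] .
    have "(t div c div b * b + t div c mod b) * c + t mod c = t"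
      using div_mult_mod_eq[of "t div c" b] div_mult_mod_eq[of t c] by simp
    thus "(\<lambda>(j,r). idx3 b c (r div c) j (r mod c)) ((t div c) mod b, (t div c div b)*c + t mod c) = t"
      unfolding prod.case e1 e2 idx3_def .
  qed
  show "(\<lambda>(j,r). idx3 b c (r div c) j (r mod c)) ` ({..<b} \<times> {..<a*c}) \<subseteq> {..<a*b*c}"
  proof
    fix y assume "y \<in> (\<lambda>(j,r). idx3 b c (r div c) j (r mod c)) ` ({..<b} \<times> {..<a*c})"
    then obtain j r where y: "y = idx3 b c (r div c) j (r mod c)" and j: "j < b" and r: "r < a*c" by auto
    have c0: "c > 0" using pos_of_lt[OF r] .
    have q: "r div c < a" using r by (simp add: less_mult_imp_div_less)
    have "r div c * b + j < a * b" by (rule lin_idx[OF q j])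
    hence "(r div c * b + j) * c + r mod c < a * b * c" using c0 lin_idx[of "r div c * b + j" "a*b" "r mod c" c] by simp
    thus "y \<in> {..<a*b*c}" unfolding y idx3_def by simp
  qed
  show "(\<lambda>t. ((t div c) mod b, (t div c div b)*c + t mod c)) ` {..<a*b*c} \<subseteq> {..<b} \<times> {..<a*c}"
  proof
    fix y assume "y \<in> (\<lambda>t. ((t div c) mod b, (t div c div b)*c + t mod c)) ` {..<a*b*c}"
    then obtain t where y: "y = ((t div c) mod b, (t div c div b)*c + t mod c)" and t: "t < a*b*c" by auto
    have c0: "c > 0" using t pos_of_lt[of t "a*b" c] by simp
    have td: "t div c < a*b" using t by (simp add: less_mult_imp_div_less)
    have b0: "b > 0" using pos_of_lt[OF td] .
    have tdd: "t div c div b < a" using td by (simp add: less_mult_imp_div_less)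
    have "(t div c div b)*c + t mod c < a * c" using c0 by (intro lin_idx[OF tdd]) simp
    thus "y \<in> {..<b} \<times> {..<a*c}" unfolding y using b0 by simp
  qed
qed

lemma bij_C: "bij_betw (\<lambda>(ij,r). idx3 b c (fst ij) (snd ij) r) (({..<a} \<times> {..<b}) \<times> {..<c}) {..<a*b*c}"
proof (rule bij_betw_byWitness[where f'="\<lambda>t. ((t div c div b, t div c mod b), t mod c)"])
  show "\<forall>x\<in>({..<a} \<times> {..<b}) \<times> {..<c}. (\<lambda>t. ((t div c div b, t div c mod b), t mod c))
          ((\<lambda>(ij,r). idx3 b c (fst ij) (snd ij) r) x) = x"
  proof
    fix x assume "x \<in> ({..<a} \<times> {..<b}) \<times> {..<c}"
    then obtain i j r where x: "x = ((i,j),r)" and i: "i < a" and j: "j < b" and r: "r < c" by auto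
    define t where "t = idx3 b c i j r"
    have t1: "t div c = i*b + j" unfolding t_def idx3_def using lin_div[OF r] .
    have t2: "t mod c = r" unfolding t_def idx3_def using lin_mod[OF r] .
    show "(\<lambda>t. ((t div c div b, t div c mod b), t mod c)) ((\<lambda>(ij,r). idx3 b c (fst ij) (snd ij) r) x) = x"
      unfolding x prod.case fst_conv snd_conv t_def[symmetric] t1 t2 using lin_div[OF j] lin_mod[OF j] by simp
  qed
  show "\<forall>t\<in>{..<a*b*c}. (\<lambda>(ij,r). idx3 b c (fst ij) (snd ij) r) ((t div c div b, t div c mod b), t mod c) = t"
  proof
    fix t :: nat
    have "(t div c div b * b + t div c mod b) * c + t mod c = t"
      using div_mult_mod_eq[of "t div c" b] div_mult_mod_eq[of t c] by simp
    thus "(\<lambda>(ij,r). idx3 b c (fst ij) (snd ij) r) ((t div c div b, t div c mod b), t mod c) = t"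
      unfolding prod.case fst_conv snd_conv idx3_def .
  qed
  show "(\<lambda>(ij,r). idx3 b c (fst ij) (snd ij) r) ` (({..<a} \<times> {..<b}) \<times> {..<c}) \<subseteq> {..<a*b*c}"
  proof
    fix y assume "y \<in> (\<lambda>(ij,r). idx3 b c (fst ij) (snd ij) r) ` (({..<a} \<times> {..<b}) \<times> {..<c})"
    then obtain i j r where y: "y = idx3 b c i j r" and i: "i < a" and j: "j < b" and r: "r < c" by auto
    have "i * b + j < a * b" by (rule lin_idx[OF i j])
    hence "(i * b + j) * c + r < a * b * c" by (intro lin_idx[OF _ r])
    thus "y \<in> {..<a*b*c}" unfolding y idx3_def by simp
  qed
  show "(\<lambda>t. ((t div c div b, t div c mod b), t mod c)) ` {..<a*b*c} \<subseteq> ({..<a} \<times> {..<b}) \<times> {..<c}"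
  proof
    fix y assume "y \<in> (\<lambda>t. ((t div c div b, t div c mod b), t mod c)) ` {..<a*b*c}"
    then obtain t where y: "y = ((t div c div b, t div c mod b), t mod c)" and t: "t < a*b*c" by auto
    have c0: "c > 0" using t pos_of_lt[of t "a*b" c] by simp
    have td: "t div c < a*b" using t by (simp add: less_mult_imp_div_less)
    have b0: "b > 0" using pos_of_lt[OF td] .
    have tdd: "t div c div b < a" using td by (simp add: less_mult_imp_div_less)
    show "y \<in> ({..<a} \<times> {..<b}) \<times> {..<c}" unfolding y using b0 c0 tdd by simp
  qed
qed


lemma cmi_lower:
  assumes a: "a > 0" and b: "b > 0" and d: "density (a*b*c) S"
  shows "cmi a b c S \<ge> - 2 * ln (real (a*b))"
proof -
  define N where "N = a*b*c"
  obtain psi where e: "ens N {..<N} psi S"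
    and orth0: "\<forall>l<N. \<forall>l'<N. l \<noteq> l' \<longrightarrow> ip N (psi l) (psi l') = 0"
    and tr: "(\<Sum>l<N. nrm2 N (psi l)) = 1"
    using density_ens[OF d[folded N_def]] by blast
  have orth: "\<And>l l'. l \<in> {..<N} \<Longrightarrow> l' \<in> {..<N} \<Longrightarrow> l \<noteq> l' \<Longrightarrow> ip N (psi l) (psi l') = 0"
    using orth0 by auto
  define E where "E = (\<Sum>l<N. eta (nrm2 N (psi l)))"
  have HABC: "entropy S \<le> E" unfolding E_def using ens_upper[OF e] by simp
  have HAC: "E - ln (real b) \<le> entropy (red_AC a b c S)"
  proof -
    have "(\<Sum>l\<in>{..<N}. eta (nrm2 N (psi l))) - ln (real (card {..<b})) * (\<Sum>l\<in>{..<N}. nrm2 N (psi l))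
          \<le> entropy (red_AC a b c S)"
    proof (rule ptrace_bound[OF e orth, where phi="\<lambda>j r. idx3 b c (r div c) j (r mod c)" and M="a*c"])
      show "bij_betw (\<lambda>(i,r). idx3 b c (r div c) i (r mod c)) ({..<b} \<times> {..<a*c}) {..<N}"
        unfolding N_def by (rule bij_AC)
      show "finite {..<b}" by simp
      show "{..<b} \<noteq> {}" using b by auto
      show "red_AC a b c S \<in> carrier_mat (a*c) (a*c)" unfolding red_AC_def by simp
      show "red_AC a b c S $$ (r,s) = (\<Sum>i\<in>{..<b}. S $$ (idx3 b c (r div c) i (r mod c), idx3 b c (s div c) i (s mod c)))"
        if "r < a*c" "s < a*c" for r s using that unfolding red_AC_def by simp
    qed
    thus ?thesis unfolding E_def using tr by simp
  qed
  have HBC: "E - ln (real a) \<le> entropy (red_BC a b c S)"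
  proof -
    have "(\<Sum>l\<in>{..<N}. eta (nrm2 N (psi l))) - ln (real (card {..<a})) * (\<Sum>l\<in>{..<N}. nrm2 N (psi l))
          \<le> entropy (red_BC a b c S)"
    proof (rule ptrace_bound[OF e orth, where phi="\<lambda>i r. idx3 b c i (r div c) (r mod c)" and M="b*c"])
      show "bij_betw (\<lambda>(i,r). idx3 b c i (r div c) (r mod c)) ({..<a} \<times> {..<b*c}) {..<N}"
        unfolding N_def by (rule bij_BC)
      show "finite {..<a}" by simp
      show "{..<a} \<noteq> {}" using a by auto
      show "red_BC a b c S \<in> carrier_mat (b*c) (b*c)" unfolding red_BC_def by simp
      show "red_BC a b c S $$ (r,s) = (\<Sum>i\<in>{..<a}. S $$ (idx3 b c i (r div c) (r mod c), idx3 b c i (s div c) (s mod c)))"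
        if "r < b*c" "s < b*c" for r s using that unfolding red_BC_def by simp
    qed
    thus ?thesis unfolding E_def using tr by simp
  qed
  have HC: "entropy (red_C a b c S) \<le> E + ln (real (a*b))"
  proof -
    define I where "I = {..<a} \<times> {..<b}"
    define phi where "phi ij r = idx3 b c (fst ij) (snd ij) r" for ij r
    have bij: "bij_betw (\<lambda>(i,r). phi i r) (I \<times> {..<c}) {..<N}"
      unfolding N_def I_def phi_def by (rule bij_C)
    have finI: "finite I" and Ine: "I \<noteq> {}" unfolding I_def using a b by auto
    have cI: "card I = a*b" unfolding I_def by (simp add: card_cartesian_product)
    have eC: "ens c ({..<N} \<times> I) (\<lambda>(l,i) r. psi l (phi i r)) (red_C a b c S)"
    proof (rule ptrace_ens[OF e bij finI])
      show "red_C a b c S \<in> carrier_mat c c" unfolding red_C_def by simp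
      show "red_C a b c S $$ (r,s) = (\<Sum>i\<in>I. S $$ (phi i r, phi i s))" if "r < c" "s < c" for r s
        using that unfolding red_C_def I_def phi_def sum_prod_set by simp
    qed
    have "entropy (red_C a b c S) \<le> (\<Sum>x\<in>{..<N} \<times> I. eta (nrm2 c ((\<lambda>(l,i) r. psi l (phi i r)) x)))"
      by (rule ens_upper[OF eC])
    also have "\<dots> = (\<Sum>l<N. \<Sum>t\<in>I. eta (nrm2 c (\<lambda>r. psi l (phi t r))))"
      unfolding sum_prod_set by simp
    also have "\<dots> \<le> (\<Sum>l<N. eta (nrm2 N (psi l)) + nrm2 N (psi l) * ln (real (card I)))"
    proof (rule sum_mono)
      fix l assume "l \<in> {..<N}"
      have pl: "(\<Sum>t\<in>I. nrm2 c (\<lambda>r. psi l (phi t r))) = nrm2 N (psi l)"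
        unfolding nrm2_def using reindex_bij[OF bij finI, of "\<lambda>t. (cmod (psi l t))\<^sup>2"] by simp
      show "(\<Sum>t\<in>I. eta (nrm2 c (\<lambda>r. psi l (phi t r)))) \<le> eta (nrm2 N (psi l)) + nrm2 N (psi l) * ln (real (card I))"
        using mix_bound_one[OF finI Ine, of "\<lambda>t. nrm2 c (\<lambda>r. psi l (phi t r))"] nrm2_nonneg unfolding pl by simp
    qed
    also have "\<dots> = E + ln (real (a*b))" unfolding E_def sum.distrib sum_distrib_right[symmetric] tr cI by simp
    finally show ?thesis .
  qed
  have lnab: "ln (real (a*b)) = ln (real a) + ln (real b)" using a b by (simp add: ln_mult)
  show ?thesis unfolding cmi_def using HABC HAC HBC HC lnab by linarith
qed


definition dmat :: "nat \<Rightarrow> (nat \<Rightarrow> real) \<Rightarrow> complex mat" where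
  "dmat n d = mat n n (\<lambda>(r,s). if r = s then complex_of_real (d r) else 0)"

lemma entropy_dmat: "entropy (dmat n d) = (\<Sum>k<n. eta (d k))"
proof (rule entropy_spec)
  show "dmat n d \<in> carrier_mat n n" unfolding dmat_def by simp
  show "onb n n (\<lambda>k r. if k = r then 1 else 0)" unfolding onb_def ip_def
    by (auto simp: if_distrib sum.delta cong: if_cong)
  show "\<forall>r<n. \<forall>s<n. dmat n d $$ (r, s) =
      (\<Sum>k<n. complex_of_real (d k) * (if k = r then 1 else 0) * cnj (if k = s then 1 else 0))"
  proof (intro allI impI)
    fix r s assume r: "r < n" and s: "s < n"
    have "(\<Sum>k<n. complex_of_real (d k) * (if k = r then 1 else 0) * cnj (if k = s then 1 else 0))
        = (\<Sum>k<n. if k = r then (if r = s then complex_of_real (d r) else 0) else 0)"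
      by (intro sum.cong refl) auto
    also have "\<dots> = (if r = s then complex_of_real (d r) else 0)" using r by simp
    finally show "dmat n d $$ (r, s) = (\<Sum>k<n. complex_of_real (d k) * (if k = r then 1 else 0) * cnj (if k = s then 1 else 0))"
      unfolding dmat_def using r s by simp
  qed
qed

lemma density_dmat:
  assumes d0: "\<And>k. k < n \<Longrightarrow> d k \<ge> 0" and ds: "(\<Sum>k<n. d k) = 1"
  shows "density n (dmat n d)"
  unfolding density_def
proof (intro conjI ballI)
  show D: "dmat n d \<in> carrier_mat n n" unfolding dmat_def by simp
  show "mat_adjoint (dmat n d) = dmat n d"
  proof (rule eq_matI)
    fix i j assume "i < dim_row (dmat n d)" "j < dim_col (dmat n d)"
    hence "i < n" "j < n" unfolding dmat_def by auto
    thus "mat_adjoint (dmat n d) $$ (i,j) = dmat n d $$ (i,j)"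
      using adjoint_entry[OF D] unfolding dmat_def by auto
  qed (auto simp: mat_adjoint_def dmat_def mat_of_rows_def)
  fix v :: "complex vec" assume v: "v \<in> carrier_vec n"
  have Dv: "(dmat n d *\<^sub>v v) $ r = of_real (d r) * v $ r" if r: "r < n" for r
  proof -
    have "(dmat n d *\<^sub>v v) $ r = (\<Sum>s<n. (if r = s then complex_of_real (d r) else 0) * v $ s)"
      using r v unfolding dmat_def by (simp add: scalar_prod_def atLeast0LessThan)
    also have "\<dots> = (\<Sum>s<n. if s = r then complex_of_real (d r) * v $ r else 0)"
      by (intro sum.cong refl) auto
    finally show ?thesis using r by simp
  qed
  have "(dmat n d *\<^sub>v v) \<bullet>c v = (\<Sum>r<n. of_real (d r) * (v $ r * cnj (v $ r)))"
    using v Dv unfolding dmat_def by (simp add: scalar_prod_def atLeast0LessThan mult.assoc)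
  also have "\<dots> = of_real (\<Sum>r<n. d r * (cmod (v $ r))\<^sup>2)"
    unfolding of_real_sum by (intro sum.cong refl) (simp only: of_real_mult cmod_sq_c)
  finally have "Re ((dmat n d *\<^sub>v v) \<bullet>c v) = (\<Sum>r<n. d r * (cmod (v $ r))\<^sup>2)" by simp
  also have "\<dots> \<ge> 0" using d0 by (intro sum_nonneg) simp
  finally show "0 \<le> Re ((dmat n d *\<^sub>v v) \<bullet>c v)" .
next
  have "mtrace (dmat n d) = (\<Sum>r<n. complex_of_real (d r))"
    unfolding mtrace_def dmat_def by simp
  also have "\<dots> = 1" unfolding of_real_sum[symmetric] ds by simp
  finally show "mtrace (dmat n d) = 1" .
qed

lemma eta_half: "eta (1/2) = ln 2 / 2"
  unfolding eta_def by (simp add: ln_div)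

definition rho :: "complex mat" where
  "rho = dmat 4 (\<lambda>k. if k = 0 \<or> k = 3 then 1/2 else 0)"

definition sigw :: "complex mat" where
  "sigw = dmat 8 (\<lambda>k. if k = 0 \<or> k = 7 then 1/2 else 0)"

lemma less4: "(r::nat) < 4 \<Longrightarrow> r = 0 \<or> r = 1 \<or> r = 2 \<or> r = 3" by auto

lemma rho_density: "density (2*2) rho"
proof -
  have "density 4 rho" unfolding rho_def by (rule density_dmat) (auto simp: lessThan_nat_numeral)
  thus ?thesis by simp
qed

lemma sigw_density: "density (2*2*2) sigw"
proof -
  have "density 8 sigw" unfolding sigw_def by (rule density_dmat) (auto simp: lessThan_nat_numeral)
  thus ?thesis by simp
qed

lemma sigw_red_AB: "red_AB 2 2 2 sigw = rho"
proof (rule eq_matI)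
  fix r s assume "r < dim_row rho" "s < dim_col rho"
  hence r: "r < 4" and s: "s < 4" unfolding rho_def dmat_def by auto
  show "red_AB 2 2 2 sigw $$ (r,s) = rho $$ (r,s)"
    using less4[OF r] less4[OF s] unfolding red_AB_def rho_def sigw_def dmat_def idx3_def
    by (auto simp: lessThan_nat_numeral)
qed (auto simp: red_AB_def rho_def dmat_def)

lemma sigw_AC: "red_AC 2 2 2 sigw = dmat 4 (\<lambda>k. if k = 0 \<or> k = 3 then 1/2 else 0)"
proof (rule eq_matI)
  fix r s assume "r < dim_row (dmat 4 (\<lambda>k. if k = 0 \<or> k = 3 then 1/2 else 0))" "s < dim_col (dmat 4 (\<lambda>k. if k = 0 \<or> k = 3 then 1/2 else 0))"
  hence r: "r < 4" and s: "s < 4" unfolding dmat_def by auto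
  show "red_AC 2 2 2 sigw $$ (r,s) = dmat 4 (\<lambda>k. if k = 0 \<or> k = 3 then 1/2 else 0) $$ (r,s)"
    using less4[OF r] less4[OF s] unfolding red_AC_def sigw_def dmat_def idx3_def
    by (auto simp: lessThan_nat_numeral)
qed (auto simp: red_AC_def dmat_def)

lemma sigw_BC: "red_BC 2 2 2 sigw = dmat 4 (\<lambda>k. if k = 0 \<or> k = 3 then 1/2 else 0)"
proof (rule eq_matI)
  fix r s assume "r < dim_row (dmat 4 (\<lambda>k. if k = 0 \<or> k = 3 then 1/2 else 0))" "s < dim_col (dmat 4 (\<lambda>k. if k = 0 \<or> k = 3 then 1/2 else 0))"
  hence r: "r < 4" and s: "s < 4" unfolding dmat_def by auto
  show "red_BC 2 2 2 sigw $$ (r,s) = dmat 4 (\<lambda>k. if k = 0 \<or> k = 3 then 1/2 else 0) $$ (r,s)"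
    using less4[OF r] less4[OF s] unfolding red_BC_def sigw_def dmat_def idx3_def
    by (auto simp: lessThan_nat_numeral)
qed (auto simp: red_BC_def dmat_def)

lemma sigw_C: "red_C 2 2 2 sigw = dmat 2 (\<lambda>k. 1/2)"
proof (rule eq_matI)
  fix r s assume "r < dim_row (dmat 2 (\<lambda>k. 1/2))" "s < dim_col (dmat 2 (\<lambda>k. 1/2))"
  hence r: "r < 2" and s: "s < 2" unfolding dmat_def by auto
  hence "r = 0 \<or> r = 1" "s = 0 \<or> s = 1" by auto
  thus "red_C 2 2 2 sigw $$ (r,s) = dmat 2 (\<lambda>k. 1/2) $$ (r,s)"
    unfolding red_C_def sigw_def dmat_def idx3_def
    by (auto simp: lessThan_nat_numeral)
qed (auto simp: red_C_def dmat_def)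

lemma cmi_sigw: "cmi 2 2 2 sigw = 0"
proof -
  have e4: "entropy (dmat 4 (\<lambda>k. if k = 0 \<or> k = 3 then 1/2 else 0)) = ln 2"
    unfolding entropy_dmat by (simp add: lessThan_nat_numeral eta_half)
  have e2: "entropy (dmat 2 (\<lambda>k. 1/2)) = ln 2"
    unfolding entropy_dmat by (simp add: lessThan_nat_numeral eta_half)
  have e8: "entropy sigw = ln 2"
    unfolding sigw_def entropy_dmat by (simp add: lessThan_nat_numeral eta_half)
  show ?thesis unfolding cmi_def sigw_AC sigw_BC sigw_C e4 e2 e8 by simp
qed


lemma idx3_lt: "i < a \<Longrightarrow> j < b \<Longrightarrow> k < c \<Longrightarrow> idx3 b c i j k < a*b*c"
  unfolding idx3_def by (intro lin_idx lin_idx[of i a j b]) auto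

lemma sum_split: "(\<Sum>r<m*(n::nat). g r) = (\<Sum>i<m. \<Sum>k<n. g (i*n+k))"
  using reindex_bij[OF bij_BC[where b=1 and c=n and a=m], where f=g] unfolding idx_BC by simp

lemma ip_split: "ip (m*(n::nat)) x y = (\<Sum>i<m. \<Sum>k<n. x (i*n+k) * cnj (y (i*n+k)))"
  unfolding ip_def by (rule sum_split)

lemma rho_entry: "x < 4 \<Longrightarrow> y < 4 \<Longrightarrow> rho $$ (x,y) =
   (if x = y then complex_of_real (if x = 0 \<or> x = 3 then 1/2 else 0) else 0)"
  unfolding rho_def dmat_def by simp

lemma pure_cmi_ge:
  assumes c: "c > 0" and p: "pure_state (2*2*c) S" and red: "red_AB 2 2 c S = rho"
  shows "ln 2 \<le> cmi 2 2 c S"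
proof -
  define N where "N = 2*2*c"
  obtain psi where psi: "psi \<in> carrier_vec N" and Sdef: "S = mat N N (\<lambda>(i,j). psi $ i * cnj (psi $ j))"
    using p unfolding pure_state_def N_def by blast
  define f where "f r = psi $ r" for r
  have S: "S \<in> carrier_mat N N" unfolding Sdef by simp
  have Sd: "S $$ (x,y) = f x * cnj (f y)" if "x < N" "y < N" for x y
    unfolding Sdef f_def using that by simp
  have nrm1: "nrm2 N f = 1"
  proof -
    have "mtrace S = 1" using p unfolding pure_state_def density_def N_def by simp
    moreover have "mtrace S = ip N f f" unfolding mtrace_def ip_def using S Sd by simp
    ultimately have "complex_of_real (nrm2 N f) = 1" unfolding nrm2_c by simp
    thus ?thesis by (simp only: of_real_eq_1_iff)
  qed
  define G where "G i j i' j' = (\<Sum>k<c. f (idx3 2 c i j k) * cnj (f (idx3 2 c i' j' k)))" for i j i' j'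
  have Gv: "G i j i' j' = rho $$ (i*2+j, i'*2+j')" if "i < 2" "j < 2" "i' < 2" "j' < 2" for i j i' j'
  proof -
    have lt: "i*2+j < 4" "i'*2+j' < 4" using that by auto
    have "rho $$ (i*2+j, i'*2+j') = red_AB 2 2 c S $$ (i*2+j, i'*2+j')" using red by simp
    also have "\<dots> = (\<Sum>k<c. S $$ (idx3 2 c i j k, idx3 2 c i' j' k))"
      unfolding red_AB_def using lt that lin_div[of j 2 i] lin_mod[of j 2 i] lin_div[of j' 2 i'] lin_mod[of j' 2 i']
      by simp
    also have "\<dots> = G i j i' j'" unfolding G_def using Sd idx3_lt[of i 2 j 2 _ c] idx3_lt[of i' 2 j' 2 _ c] that
      unfolding N_def by (intro sum.cong refl) simp
    finally show ?thesis by simp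
  qed
  have eS: "ens N {..<1::nat} (\<lambda>l. f) S" unfolding ens_def using S Sd by simp
  have HABC: "entropy S \<le> 0"
    using ens_upper[OF eS] nrm1 unfolding eta_def by simp
  define q where "q i j = nrm2 c (\<lambda>k. f (idx3 2 c i j k))" for i j
  have qv: "q i j = (if i*2+j = 0 \<or> i*2+j = 3 then 1/2 else 0)" if "i < 2" "j < 2" for i j
  proof -
    have "complex_of_real (q i j) = G i j i j" unfolding q_def nrm2_c G_def ip_def ..
    also have "\<dots> = complex_of_real (if i*2+j = 0 \<or> i*2+j = 3 then 1/2 else 0)"
      unfolding Gv[OF that that] using rho_entry that by simp
    finally show ?thesis by (simp only: of_real_eq_iff)
  qed
  have HC: "entropy (red_C 2 2 c S) \<le> ln 2"
  proof -
    define I where "I = {..<2::nat} \<times> {..<2::nat}"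
    define phi where "phi ij r = idx3 2 c (fst ij) (snd ij) r" for ij r
    have bij: "bij_betw (\<lambda>(i,r). phi i r) (I \<times> {..<c}) {..<N}"
      unfolding N_def I_def phi_def by (rule bij_C)
    have finI: "finite I" unfolding I_def by simp
    have eC: "ens c ({..<1::nat} \<times> I) (\<lambda>(l,i) r. f (phi i r)) (red_C 2 2 c S)"
    proof (rule ptrace_ens[OF eS bij finI])
      show "red_C 2 2 c S \<in> carrier_mat c c" unfolding red_C_def by simp
      show "red_C 2 2 c S $$ (r,s) = (\<Sum>i\<in>I. S $$ (phi i r, phi i s))" if "r < c" "s < c" for r s
        using that unfolding red_C_def I_def phi_def sum_prod_set by simp
    qed
    have "entropy (red_C 2 2 c S) \<le> (\<Sum>x\<in>{..<1::nat} \<times> I. eta (nrm2 c ((\<lambda>(l,i) r. f (phi i r)) x)))"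
      by (rule ens_upper[OF eC])
    also have "\<dots> = (\<Sum>i<2. \<Sum>j<2. eta (q i j))"
      unfolding sum_prod_set I_def q_def phi_def by simp
    also have "\<dots> = ln 2" using qv by (simp add: lessThan_nat_numeral eta_half)
    finally show ?thesis .
  qed
  have HAC: "ln 2 \<le> entropy (red_AC 2 2 c S)"
  proof -
    define phi where "phi j r = idx3 2 c (r div c) j (r mod c)" for j r
    have phik: "phi j (i*c+k) = idx3 2 c i j k" if "k < c" for i j k
      unfolding phi_def using lin_div[OF that] lin_mod[OF that] by simp
    have bij: "bij_betw (\<lambda>(i,r). phi i r) ({..<2} \<times> {..<2*c}) {..<N}"
      unfolding N_def phi_def by (rule bij_AC)
    have eAC: "ens (2*c) ({..<1::nat} \<times> {..<2}) (\<lambda>(l,i) r. f (phi i r)) (red_AC 2 2 c S)"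
    proof (rule ptrace_ens[OF eS bij])
      show "red_AC 2 2 c S \<in> carrier_mat (2*c) (2*c)" unfolding red_AC_def by simp
      show "red_AC 2 2 c S $$ (r,s) = (\<Sum>i\<in>{..<2}. S $$ (phi i r, phi i s))" if "r < 2*c" "s < 2*c" for r s
        using that unfolding red_AC_def phi_def by simp
    qed simp
    have ipj: "ip (2*c) (\<lambda>r. f (phi j r)) (\<lambda>r. f (phi j' r)) = (\<Sum>i<2. G i j i j')" if "j < 2" "j' < 2" for j j'
      unfolding ip_split G_def using phik by simp
    have "(\<Sum>x\<in>{..<1::nat} \<times> {..<2}. eta (nrm2 (2*c) ((\<lambda>(l,i) r. f (phi i r)) x))) \<le> entropy (red_AC 2 2 c S)"
    proof (rule ens_lower[OF eAC])
      fix x x' assume x: "x \<in> {..<1::nat} \<times> {..<2::nat}" and x': "x' \<in> {..<1::nat} \<times> {..<2::nat}" and ne: "x \<noteq> x'"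
      then obtain j j' where xj: "x = (0,j)" "x' = (0,j')" and j: "j < 2" "j' < 2" and jj: "j \<noteq> j'" by auto
      show "ip (2*c) ((\<lambda>(l,i) r. f (phi i r)) x) ((\<lambda>(l,i) r. f (phi i r)) x') = 0"
        unfolding xj prod.case ipj[OF j] using j jj Gv rho_entry by (simp add: lessThan_nat_numeral)
    qed
    moreover have "nrm2 (2*c) (\<lambda>r. f (phi j r)) = 1/2" if "j < 2" for j
    proof -
      have "complex_of_real (nrm2 (2*c) (\<lambda>r. f (phi j r))) = (\<Sum>i<2. G i j i j)" unfolding nrm2_c ipj[OF that that] ..
      also have "\<dots> = complex_of_real (1/2)" using that Gv rho_entry by (auto simp: lessThan_nat_numeral)
      finally show ?thesis by (simp only: of_real_eq_iff)
    qed
    ultimately show ?thesis unfolding sum_prod_set by (simp add: lessThan_nat_numeral eta_half)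
  qed
  have HBC: "ln 2 \<le> entropy (red_BC 2 2 c S)"
  proof -
    define phi where "phi i r = idx3 2 c i (r div c) (r mod c)" for i r
    have phik: "phi i (j*c+k) = idx3 2 c i j k" if "k < c" for i j k
      unfolding phi_def using lin_div[OF that] lin_mod[OF that] by simp
    have bij: "bij_betw (\<lambda>(i,r). phi i r) ({..<2} \<times> {..<2*c}) {..<N}"
      unfolding N_def phi_def by (rule bij_BC)
    have eBC: "ens (2*c) ({..<1::nat} \<times> {..<2}) (\<lambda>(l,i) r. f (phi i r)) (red_BC 2 2 c S)"
    proof (rule ptrace_ens[OF eS bij])
      show "red_BC 2 2 c S \<in> carrier_mat (2*c) (2*c)" unfolding red_BC_def by simp
      show "red_BC 2 2 c S $$ (r,s) = (\<Sum>i\<in>{..<2}. S $$ (phi i r, phi i s))" if "r < 2*c" "s < 2*c" for r s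
        using that unfolding red_BC_def phi_def by simp
    qed simp
    have ipi: "ip (2*c) (\<lambda>r. f (phi i r)) (\<lambda>r. f (phi i' r)) = (\<Sum>j<2. G i j i' j)" if "i < 2" "i' < 2" for i i'
      unfolding ip_split G_def using phik by simp
    have "(\<Sum>x\<in>{..<1::nat} \<times> {..<2}. eta (nrm2 (2*c) ((\<lambda>(l,i) r. f (phi i r)) x))) \<le> entropy (red_BC 2 2 c S)"
    proof (rule ens_lower[OF eBC])
      fix x x' assume x: "x \<in> {..<1::nat} \<times> {..<2::nat}" and x': "x' \<in> {..<1::nat} \<times> {..<2::nat}" and ne: "x \<noteq> x'"
      then obtain i i' where xi: "x = (0,i)" "x' = (0,i')" and i: "i < 2" "i' < 2" and ii: "i \<noteq> i'" by auto
      show "ip (2*c) ((\<lambda>(l,i) r. f (phi i r)) x) ((\<lambda>(l,i) r. f (phi i r)) x') = 0"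
        unfolding xi prod.case ipi[OF i] using i ii Gv rho_entry by (simp add: lessThan_nat_numeral)
    qed
    moreover have "nrm2 (2*c) (\<lambda>r. f (phi i r)) = 1/2" if "i < 2" for i
    proof -
      have "complex_of_real (nrm2 (2*c) (\<lambda>r. f (phi i r))) = (\<Sum>j<2. G i j i j)" unfolding nrm2_c ipi[OF that that] ..
      also have "\<dots> = complex_of_real (1/2)" using that Gv rho_entry by (auto simp: lessThan_nat_numeral)
      finally show ?thesis by (simp only: of_real_eq_iff)
    qed
    ultimately show ?thesis unfolding sum_prod_set by (simp add: lessThan_nat_numeral eta_half)
  qed
  show ?thesis unfolding cmi_def using HABC HC HAC HBC by linarith
qed


definition psip :: "complex vec" where
  "psip = vec 8 (\<lambda>i. if i = 0 \<or> i = 7 then complex_of_real (sqrt (1/2)) else 0)"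

definition sigp :: "complex mat" where
  "sigp = mat 8 8 (\<lambda>(i,j). psip $ i * cnj (psip $ j))"

lemma sqrt_half_sq: "complex_of_real (sqrt (1/2)) * complex_of_real (sqrt (1/2)) = complex_of_real (1/2)"
  by (simp only: of_real_mult[symmetric] real_sqrt_mult_self) simp

lemma sigp_entry: "i < 8 \<Longrightarrow> j < 8 \<Longrightarrow> sigp $$ (i,j) =
   (if (i = 0 \<or> i = 7) \<and> (j = 0 \<or> j = 7) then complex_of_real (1/2) else 0)"
  unfolding sigp_def psip_def by (simp add: sqrt_half_sq del: of_real_divide)

lemma sigp_density: "density 8 sigp"
  unfolding density_def
proof (intro conjI ballI)
  show D: "sigp \<in> carrier_mat 8 8" unfolding sigp_def by simp
  show "mat_adjoint sigp = sigp"
  proof (rule eq_matI)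
    fix i j assume "i < dim_row sigp" "j < dim_col sigp"
    hence "i < 8" "j < 8" unfolding sigp_def by auto
    thus "mat_adjoint sigp $$ (i,j) = sigp $$ (i,j)"
      using adjoint_entry[OF D] sigp_entry by auto
  qed (auto simp: mat_adjoint_def sigp_def mat_of_rows_def)
  fix v :: "complex vec" assume v: "v \<in> carrier_vec 8"
  define w where "w = (\<Sum>s<8. cnj (psip $ s) * v $ s)"
  have Sv: "(sigp *\<^sub>v v) $ r = psip $ r * w" if r: "r < 8" for r
    using r v unfolding sigp_def w_def
    by (simp add: scalar_prod_def atLeast0LessThan sum_distrib_left mult_ac)
  have "(sigp *\<^sub>v v) \<bullet>c v = (\<Sum>r<8. psip $ r * w * cnj (v $ r))"
    using v Sv unfolding sigp_def by (simp add: scalar_prod_def atLeast0LessThan)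
  also have "\<dots> = w * cnj w" unfolding w_def cnj_sum sum_distrib_left sum_distrib_right
    by (intro sum.cong refl) (simp add: mult_ac)
  finally show "0 \<le> Re ((sigp *\<^sub>v v) \<bullet>c v)" by (simp add: complex_mult_cnj)
next
  show "mtrace sigp = 1" unfolding mtrace_def using sigp_entry
    by (simp add: sigp_def lessThan_nat_numeral del: index_mat)
qed

lemma sigp_pure: "pure_state (2*2*2) sigp"
proof -
  have "pure_state 8 sigp" unfolding pure_state_def
  proof (intro conjI bexI)
    show "density 8 sigp" by (rule sigp_density)
    show "sigp = mat 8 8 (\<lambda>(i,j). psip $ i * cnj (psip $ j))" by (simp add: sigp_def)
    show "psip \<in> carrier_vec 8" by (simp add: psip_def)
  qed
  thus ?thesis by simp
qed
lemma sigp_red: "red_AB 2 2 2 sigp = rho"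
proof (rule eq_matI)
  fix r s assume "r < dim_row rho" "s < dim_col rho"
  hence r: "r < 4" and s: "s < 4" unfolding rho_def dmat_def by auto
  show "red_AB 2 2 2 sigp $$ (r,s) = rho $$ (r,s)"
    using less4[OF r] less4[OF s] unfolding red_AB_def rho_def dmat_def
    by (auto simp: lessThan_nat_numeral sigp_entry idx3_def)
qed (auto simp: red_AB_def rho_def dmat_def)

theorem corollary3:
  shows "\<exists>a b (\<rho> :: complex mat). density (a*b) \<rho> \<and> squashed_ent a b \<rho> < squashed_ent_pure a b \<rho>"
proof (intro exI conjI)
  show "density (2*2) rho" by (rule rho_density)
  define Sset where "Sset = {cmi 2 2 c \<sigma> | c \<sigma>. c > 0 \<and> density (2*2*c) \<sigma> \<and> red_AB 2 2 c \<sigma> = rho}"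
  define Pset where "Pset = {cmi 2 2 c \<sigma> | c \<sigma>. c > 0 \<and> pure_state (2*2*c) \<sigma> \<and> red_AB 2 2 c \<sigma> = rho}"
  have bdd: "bdd_below Sset"
  proof (rule bdd_belowI)
    fix x assume "x \<in> Sset"
    then obtain c \<sigma> where x: "x = cmi 2 2 c \<sigma>" and d: "density (2*2*c) \<sigma>" unfolding Sset_def by blast
    have "- 2 * ln (real (2*2)) \<le> cmi 2 2 c \<sigma>" by (rule cmi_lower[OF _ _ d]) (simp_all only: zero_less_numeral)
    thus "- 2 * ln (real (2*2)) \<le> x" unfolding x .
  qed
  have "0 \<in> Sset" unfolding Sset_def mem_Collect_eq
  proof (intro exI[of _ "2::nat"] exI[of _ sigw] conjI)
    show "0 = cmi 2 2 2 sigw" using cmi_sigw by simp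
    show "(2::nat) > 0" by simp
    show "density (2*2*2) sigw" by (rule sigw_density)
    show "red_AB 2 2 2 sigw = rho" by (rule sigw_red_AB)
  qed
  hence S0: "Inf Sset \<le> 0" using bdd by (rule cInf_lower)
  have "cmi 2 2 2 sigp \<in> Pset" unfolding Pset_def mem_Collect_eq
  proof (intro exI[of _ "2::nat"] exI[of _ sigp] conjI)
    show "cmi 2 2 2 sigp = cmi 2 2 2 sigp" ..
    show "(2::nat) > 0" by simp
    show "pure_state (2*2*2) sigp" by (rule sigp_pure)
    show "red_AB 2 2 2 sigp = rho" by (rule sigp_red)
  qed
  hence Pne: "Pset \<noteq> {}" by blast
  have "ln 2 \<le> Inf Pset"
  proof (rule cInf_greatest[OF Pne])
    fix x assume "x \<in> Pset"
    then obtain c \<sigma> where x: "x = cmi 2 2 c \<sigma>" and c: "c > 0" and p: "pure_state (2*2*c) \<sigma>"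
      and r: "red_AB 2 2 c \<sigma> = rho" unfolding Pset_def by blast
    show "ln 2 \<le> x" unfolding x by (rule pure_cmi_ge[OF c p r])
  qed
  moreover have "(0::real) < ln 2" by simp
  ultimately have "Inf Sset < Inf Pset" using S0 by linarith
  thus "squashed_ent 2 2 rho < squashed_ent_pure 2 2 rho"
    unfolding squashed_ent_def squashed_ent_pure_def Sset_def Pset_def .
qed


end
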